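(* Let $m\ge 2$ and let $B$ be a set of edges of $CK(2m)$. Then $B$ is a blocker if and only if there exist an integer $a$, an integer $t$ with $2\le t\le m$, and integers $\epsilon_{t+1},\dots,\epsilon_m$ with $1\le \epsilon_{t+1}<\epsilon_{t+2}<\dots<\epsilon_m\le m-2$ (this list being empty when $t=m$) such that, with all vertex labels taken modulo $2m$, \[ B=\{[a+i-1,\,a+i]:1\le i\le t\}\ \cup\ \{[a+t+j-1-\epsilon_{t+j},\,a+t+j+\epsilon_{t+j}]:1\le j\le m-t\}. \] In particular every blocker is a crossing-free caterpillar tree whose spine is the boundary path $\langle a,a+1,\dots,a+t\rangle$ of length $t\ge 2$, and $t$ is the number of boundary edges of $B$.
   Context: $CK(2m)$ denotes the complete convex geometric graph whose vertices are the $2m$ vertices of a convex polygon, labelled cyclically $0,1,\dots,2m-1$ (labels taken modulo $2m$), and whose edges are all straight segments $[i,j]$ between pairs of vertices. Two edges with four distinct endpoints cross (meet in an interior point) iff their endpoints alternate in the cyclic order. A simple perfect matching (SPM) is a set of $m$ edges that are pairwise disjoint (no common endpoint and no crossing). A blocking set is a set of edges containing at least one edge of every SPM. A blocker is a blocking set with exactly $m$ edges. Boundary edges are the edges $[i,i+1]$. A caterpillar is a tree such that deleting all leaves and their incident edges leaves a path (or the empty graph); a spine is a longest path in it. *)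

theory Defs
  imports Main
begin

definition ck_vertices :: "nat \<Rightarrow> int set" where
  "ck_vertices m = {0..<2 * int m}"

definition ck_edges :: "nat \<Rightarrow> int set set" where
  "ck_edges m = {{i, j} | i j. i \<in> ck_vertices m \<and> j \<in> ck_vertices m \<and> i \<noteq> j}"

definition seg :: "nat \<Rightarrow> int \<Rightarrow> int \<Rightarrow> int set" where
  "seg m i j = {i mod (2 * int m), j mod (2 * int m)}"

text \<open>Two edges with four distinct endpoints cross iff their endpoints alternate
  in the cyclic order (equivalently, in the linear order of the labels 0..2m-1).\<close>
definition crosses :: "int set \<Rightarrow> int set \<Rightarrow> bool" where
  "crosses e f \<longleftrightarrow> e \<inter> f = {} \<and>
     (\<exists>a b c d. e = {a, b} \<and> f = {c, d} \<and> a < b \<and> c < d \<and>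
        ((a < c \<and> c < b \<and> b < d) \<or> (c < a \<and> a < d \<and> d < b)))"

definition disjoint_edges :: "int set \<Rightarrow> int set \<Rightarrow> bool" where
  "disjoint_edges e f \<longleftrightarrow> e \<inter> f = {} \<and> \<not> crosses e f"

definition is_SPM :: "nat \<Rightarrow> int set set \<Rightarrow> bool" where
  "is_SPM m M \<longleftrightarrow> M \<subseteq> ck_edges m \<and> finite M \<and> card M = m \<and>
     (\<forall>e\<in>M. \<forall>f\<in>M. e \<noteq> f \<longrightarrow> disjoint_edges e f)"

definition blocking_set :: "nat \<Rightarrow> int set set \<Rightarrow> bool" where
  "blocking_set m B \<longleftrightarrow> B \<subseteq> ck_edges m \<and> (\<forall>M. is_SPM m M \<longrightarrow> B \<inter> M \<noteq> {})"

definition blocker :: "nat \<Rightarrow> int set set \<Rightarrow> bool" where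
  "blocker m B \<longleftrightarrow> blocking_set m B \<and> finite B \<and> card B = m"

end

theory Submission
  imports Defs
begin


definition btw :: "int \<Rightarrow> int \<Rightarrow> int \<Rightarrow> bool" where
  "btw a b c \<longleftrightarrow> min a b < c \<and> c < max a b"

lemma crosses_iff:
  "crosses {a,b} {c,d} \<longleftrightarrow> a\<noteq>c \<and> a\<noteq>d \<and> b\<noteq>c \<and> b\<noteq>d \<and> a\<noteq>b \<and> c\<noteq>d \<and> (btw a b c \<noteq> btw a b d)"
proof
  assume "crosses {a,b} {c,d}"
  then obtain a' b' c' d' where h: "{a,b}\<inter>{c,d} = {}" "{a,b} = {a',b'}" "{c,d} = {c',d'}" "a'<b'" "c'<d'"
    "(a' < c' \<and> c' < b' \<and> b' < d') \<or> (c' < a' \<and> a' < d' \<and> d' < b')"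
    unfolding crosses_def by (elim conjE exE) (rule that, assumption+)
  have e1: "(a=a' \<and> b=b') \<or> (a=b' \<and> b=a')" using h(2) by (simp add: doubleton_eq_iff)
  have e2: "(c=c' \<and> d=d') \<or> (c=d' \<and> d=c')" using h(3) by (simp add: doubleton_eq_iff)
  have d: "a\<noteq>c" "a\<noteq>d" "b\<noteq>c" "b\<noteq>d" using h(1) by auto
  show "a\<noteq>c \<and> a\<noteq>d \<and> b\<noteq>c \<and> b\<noteq>d \<and> a\<noteq>b \<and> c\<noteq>d \<and> (btw a b c \<noteq> btw a b d)"
    using e1 e2 d h(4,5,6) unfolding btw_def min_def max_def by (elim disjE conjE; simp; linarith)
next
  assume h: "a\<noteq>c \<and> a\<noteq>d \<and> b\<noteq>c \<and> b\<noteq>d \<and> a\<noteq>b \<and> c\<noteq>d \<and> (btw a b c \<noteq> btw a b d)"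
  show "crosses {a,b} {c,d}"
    unfolding crosses_def
  proof
    show "{a,b}\<inter>{c,d} = {}" using h by auto
    have "{a,b} = {min a b, max a b}" "{c,d} = {min c d, max c d}" by (auto simp: min_def max_def)
    moreover have "min a b < max a b" "min c d < max c d" using h by (auto simp: min_def max_def)
    moreover have "(min a b < min c d \<and> min c d < max a b \<and> max a b < max c d) \<or> (min c d < min a b \<and> min a b < max c d \<and> max c d < max a b)"
      using h unfolding btw_def min_def max_def by (cases "a \<le> b"; cases "c \<le> d"; auto)
    ultimately show "\<exists>a' b' c' d'. {a,b} = {a',b'} \<and> {c,d} = {c',d'} \<and> a'<b' \<and> c'<d' \<and>
        ((a' < c' \<and> c' < b' \<and> b' < d') \<or> (c' < a' \<and> a' < d' \<and> d' < b'))"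
      by (intro exI conjI) (assumption+)
  qed
qed

lemma small_mod:
  fixes x n :: int
  assumes "-n < x" "x < n"
  shows "x mod n = (if 0 \<le> x then x else x + n)"
proof (cases "0 \<le> x")
  case True then show ?thesis using assms by simp
next
  case False
  have "x mod n = (x + n) mod n" by simp
  also have "\<dots> = x + n" using assms False by (intro mod_pos_pos_trivial) auto
  finally show ?thesis using False by simp
qed

lemma btw_arc:
  fixes n a b c :: int
  assumes "0 \<le> a" "a < n" "0 \<le> b" "b < n" "0 \<le> c" "c < n" "a \<noteq> b" "a \<noteq> c" "b \<noteq> c"
  shows "btw a b c \<longleftrightarrow> (((c-a) mod n < (b-a) mod n) = (a < b))"
  unfolding btw_def small_mod[of n "c-a"] small_mod[of n "b-a"]
  using assms by (auto simp: small_mod min_def max_def)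

lemma btw_rot:
  fixes n r a b c d :: int
  assumes "0 \<le> a" "a < n" "0 \<le> b" "b < n" "0 \<le> c" "c < n" "0 \<le> d" "d < n"
    "a\<noteq>c" "a\<noteq>d" "b\<noteq>c" "b\<noteq>d" "a\<noteq>b" "c\<noteq>d"
  shows "(btw ((a+r) mod n) ((b+r) mod n) ((c+r) mod n) \<noteq> btw ((a+r) mod n) ((b+r) mod n) ((d+r) mod n))
     \<longleftrightarrow> (btw a b c \<noteq> btw a b d)"
proof -
  have n: "n > 0" using assms by simp
  have inj: "\<And>x y. 0 \<le> x \<Longrightarrow> x < n \<Longrightarrow> 0 \<le> y \<Longrightarrow> y < n \<Longrightarrow> x \<noteq> y \<Longrightarrow> (x+r) mod n \<noteq> (y+r) mod n"
  proof
    fix x y assume xy: "0 \<le> x" "x < n" "0 \<le> y" "y < n" "x \<noteq> y" and e: "(x+r) mod n = (y+r) mod n"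
    have "((x+r) mod n - (y+r) mod n) mod n = 0" using e by simp
    hence "(x - y) mod n = 0" by (simp add: mod_diff_eq)
    thus False using xy small_mod[of n "x-y"] by (auto split: if_splits)
  qed
  have rng: "\<And>x. 0 \<le> (x+r) mod n" "\<And>x. (x+r) mod n < n" using n by auto
  have df: "\<And>x y. ((x+r) mod n - (y+r) mod n) mod n = (x - y) mod n"
    by (simp add: mod_diff_eq)
  show ?thesis
    using btw_arc[of "(a+r) mod n" n "(b+r) mod n" "(c+r) mod n"] btw_arc[of "(a+r) mod n" n "(b+r) mod n" "(d+r) mod n"]
      btw_arc[of a n b c] btw_arc[of a n b d] inj[of a b] inj[of a c] inj[of a d] inj[of b c] inj[of b d] inj[of c d]
      rng assms unfolding df by auto
qed


definition rotv :: "nat \<Rightarrow> int \<Rightarrow> int \<Rightarrow> int" where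
  "rotv m r v = (v + r) mod (2 * int m)"
definition rot :: "nat \<Rightarrow> int \<Rightarrow> int set \<Rightarrow> int set" where
  "rot m r e = rotv m r ` e"

lemma seg_rot: "rot m r (seg m a b) = seg m (a+r) (b+r)"
  unfolding rot_def rotv_def seg_def by (simp add: mod_add_left_eq)

lemma ck_edges_iff: "e \<in> ck_edges m \<longleftrightarrow> (\<exists>i j. e = {i,j} \<and> 0 \<le> i \<and> i < 2 * int m \<and> 0 \<le> j \<and> j < 2 * int m \<and> i \<noteq> j)"
  unfolding ck_edges_def ck_vertices_def by auto

lemma rot_pair: "rot m r {i,j} = {rotv m r i, rotv m r j}"
  unfolding rot_def by simp

lemma rotv_range: "m \<ge> 1 \<Longrightarrow> 0 \<le> rotv m r v \<and> rotv m r v < 2 * int m"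
  unfolding rotv_def by auto

lemma rotv_inj: assumes "0 \<le> x" "x < 2*int m" "0 \<le> y" "y < 2*int m" "rotv m r x = rotv m r y"
  shows "x = y"
proof (rule ccontr)
  assume ne: "x \<noteq> y"
  let ?n = "2 * int m"
  have "((x+r) mod ?n - (y+r) mod ?n) mod ?n = 0" using assms(5) unfolding rotv_def by simp
  hence "(x - y) mod ?n = 0" by (simp add: mod_diff_eq)
  thus False using assms ne small_mod[of ?n "x-y"] by (auto split: if_splits)
qed

lemma rotv_inv: assumes "0 \<le> x" "x < 2*int m" shows "rotv m (-r) (rotv m r x) = x"
  unfolding rotv_def using assms by (simp add: mod_diff_left_eq)

lemma rot_ck: assumes "m \<ge> 1" "e \<in> ck_edges m" shows "rot m r e \<in> ck_edges m"
proof -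
  obtain i j where e: "e = {i,j}" "0 \<le> i" "i < 2 * int m" "0 \<le> j" "j < 2 * int m" "i \<noteq> j"
    using assms(2) unfolding ck_edges_iff by blast
  have "rotv m r i \<noteq> rotv m r j" using rotv_inj[of i m j r] e by auto
  thus ?thesis unfolding ck_edges_iff e rot_pair
    using rotv_range[OF assms(1)] by blast
qed

lemma ck_sub: "e \<in> ck_edges m \<Longrightarrow> e \<subseteq> {0..<2*int m}"
  unfolding ck_edges_iff by auto

lemma rot_inv: assumes "e \<in> ck_edges m" shows "rot m (-r) (rot m r e) = e"
proof -
  have "\<forall>x\<in>e. rotv m (-r) (rotv m r x) = x"
  proof
    fix x assume "x \<in> e"
    hence "x \<in> {0..<2*int m}" using ck_sub[OF assms] by blast
    thus "rotv m (-r) (rotv m r x) = x" using rotv_inv[of x m r] by simp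
  qed
  thus ?thesis unfolding rot_def image_image by simp
qed

lemma rot_inj_ck: "inj_on (rot m r) (ck_edges m)"
proof (rule inj_onI)
  fix e f assume a: "e \<in> ck_edges m" "f \<in> ck_edges m" "rot m r e = rot m r f"
  have "e = rot m (-r) (rot m r e)" using rot_inv[OF a(1)] by simp
  also have "\<dots> = rot m (-r) (rot m r f)" using a(3) by simp
  also have "\<dots> = f" using rot_inv[OF a(2)] by simp
  finally show "e = f" .
qed

lemma rot_disj: assumes "e \<in> ck_edges m" "f \<in> ck_edges m" "e \<inter> f = {}"
  shows "rot m r e \<inter> rot m r f = {}"
proof (rule ccontr)
  assume "rot m r e \<inter> rot m r f \<noteq> {}"
  then obtain x1 x2 where x: "x1 \<in> e" "x2 \<in> f" "rotv m r x1 = rotv m r x2" unfolding rot_def by blast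
  have "x1 \<in> {0..<2*int m}" "x2 \<in> {0..<2*int m}" using x ck_sub[OF assms(1)] ck_sub[OF assms(2)] by blast+
  hence "x1 = x2" using rotv_inj[of x1 m x2 r] x by auto
  thus False using x assms(3) by auto
qed

lemma rot_cross: assumes "m \<ge> 1" "e \<in> ck_edges m" "f \<in> ck_edges m" "crosses (rot m r e) (rot m r f)"
  shows "crosses e f"
proof -
  obtain a b where e: "e = {a,b}" "0 \<le> a" "a < 2 * int m" "0 \<le> b" "b < 2 * int m" "a \<noteq> b"
    using assms(2) unfolding ck_edges_iff by blast
  obtain c d where f: "f = {c,d}" "0 \<le> c" "c < 2 * int m" "0 \<le> d" "d < 2 * int m" "c \<noteq> d"
    using assms(3) unfolding ck_edges_iff by blast
  have h: "crosses {rotv m r a, rotv m r b} {rotv m r c, rotv m r d}" using assms(4) e f rot_pair by simp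
  hence dist: "a\<noteq>c" "a\<noteq>d" "b\<noteq>c" "b\<noteq>d" unfolding crosses_iff by auto
  from h have "btw (rotv m r a) (rotv m r b) (rotv m r c) \<noteq> btw (rotv m r a) (rotv m r b) (rotv m r d)"
    unfolding crosses_iff by auto
  hence "btw a b c \<noteq> btw a b d" using btw_rot[of a "2*int m" b c d r] e f dist unfolding rotv_def by auto
  thus ?thesis unfolding e f crosses_iff using e f dist by auto
qed

lemma SPM_rot: assumes "m \<ge> 1" "is_SPM m M" shows "is_SPM m (rot m r ` M)"
proof -
  have M: "M \<subseteq> ck_edges m" "finite M" "card M = m"
    "\<And>e f. e \<in> M \<Longrightarrow> f \<in> M \<Longrightarrow> e \<noteq> f \<Longrightarrow> disjoint_edges e f"
    using assms(2) unfolding is_SPM_def by auto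
  have inj: "inj_on (rot m r) M" using rot_inj_ck M(1) inj_on_subset by blast
  show ?thesis unfolding is_SPM_def
  proof (intro conjI ballI impI)
    show "rot m r ` M \<subseteq> ck_edges m" using M(1) rot_ck[OF assms(1)] by blast
    show "finite (rot m r ` M)" using M(2) by simp
    show "card (rot m r ` M) = m" using card_image[OF inj] M(3) by simp
    fix e' f' assume e': "e' \<in> rot m r ` M" and f': "f' \<in> rot m r ` M" and ne: "e' \<noteq> f'"
    obtain e where e: "e \<in> M" "e' = rot m r e" using e' by blast
    obtain f where f: "f \<in> M" "f' = rot m r f" using f' by blast
    have "e \<noteq> f" using ne e f by auto
    hence df: "disjoint_edges e f" using M(4) e f by auto
    show "disjoint_edges e' f'" unfolding disjoint_edges_def
    proof
      show "e' \<inter> f' = {}" using rot_disj[of e m f r] df M(1) e f unfolding disjoint_edges_def by auto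
      show "\<not> crosses e' f'" using rot_cross[OF assms(1), of e f r] df M(1) e f unfolding disjoint_edges_def by auto
    qed
  qed
qed


definition good :: "nat \<Rightarrow> int set set \<Rightarrow> bool" where
  "good m M \<longleftrightarrow> M \<subseteq> ck_edges m \<and> finite M \<and> (\<forall>e\<in>M. \<forall>f\<in>M. e \<noteq> f \<longrightarrow> disjoint_edges e f)"

lemma SPM_good: "is_SPM m M \<longleftrightarrow> good m M \<and> card M = m"
  unfolding is_SPM_def good_def by auto

definition rain :: "int \<Rightarrow> int \<Rightarrow> int set set" where
  "rain u h = {{u + i, u + 2*h - 1 - i} | i. 0 \<le> i \<and> i < h}"

lemma sep_disjoint:
  assumes "e \<in> ck_edges m" "f \<in> ck_edges m" "\<forall>x\<in>e. \<forall>y\<in>f. x < y"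
  shows "disjoint_edges e f"
proof -
  obtain a b where e: "e = {a,b}" "a \<noteq> b" using assms(1) unfolding ck_edges_iff by blast
  obtain c d where f: "f = {c,d}" "c \<noteq> d" using assms(2) unfolding ck_edges_iff by blast
  have "a < c" "a < d" "b < c" "b < d" using assms(3) e f by auto
  hence "\<not> btw a b c" "\<not> btw a b d" unfolding btw_def by auto
  hence "\<not> crosses e f" unfolding e f crosses_iff by auto
  moreover have "e \<inter> f = {}" using assms(3) by fastforce
  ultimately show ?thesis unfolding disjoint_edges_def by auto
qed

lemma disjoint_edges_sym: "disjoint_edges e f \<Longrightarrow> disjoint_edges f e"
proof -
  assume h: "disjoint_edges e f"
  have "crosses f e \<Longrightarrow> crosses e f" unfolding crosses_def by (elim conjE exE) (metis Int_commute)
  thus ?thesis using h unfolding disjoint_edges_def by (auto simp: Int_commute)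
qed

lemma good_union:
  assumes "good m M1" "good m M2" "\<forall>e\<in>M1. \<forall>f\<in>M2. \<forall>x\<in>e. \<forall>y\<in>f. x < y"
  shows "good m (M1 \<union> M2)" "M1 \<inter> M2 = {}"
proof -
  have ck: "M1 \<subseteq> ck_edges m" "M2 \<subseteq> ck_edges m" using assms unfolding good_def by auto
  have ne: "\<And>e. e \<in> ck_edges m \<Longrightarrow> e \<noteq> {}" unfolding ck_edges_iff by auto
  show "M1 \<inter> M2 = {}"
  proof (rule ccontr)
    assume "M1 \<inter> M2 \<noteq> {}"
    then obtain e where "e \<in> M1" "e \<in> M2" by blast
    moreover then obtain x where "x \<in> e" using ne ck by blast
    ultimately show False using assms(3) by force
  qed
  show "good m (M1 \<union> M2)" unfolding good_def
  proof (intro conjI ballI impI)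
    show "M1 \<union> M2 \<subseteq> ck_edges m" using ck by auto
    show "finite (M1 \<union> M2)" using assms unfolding good_def by auto
    fix e f assume e: "e \<in> M1 \<union> M2" and f: "f \<in> M1 \<union> M2" and ef: "e \<noteq> f"
    show "disjoint_edges e f"
    proof (cases "e \<in> M1")
      case True
      show ?thesis
      proof (cases "f \<in> M1")
        case True
        then show ?thesis using \<open>e \<in> M1\<close> ef assms(1) unfolding good_def by auto
      next
        case False
        hence "f \<in> M2" using f by auto
        thus ?thesis using sep_disjoint[of e m f] \<open>e \<in> M1\<close> ck assms(3) by blast
      qed
    next
      case False
      hence e2: "e \<in> M2" using e by auto
      show ?thesis
      proof (cases "f \<in> M1")
        case True
        hence "disjoint_edges f e" using sep_disjoint[of f m e] e2 ck assms(3) by blast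
        thus ?thesis by (rule disjoint_edges_sym)
      next
        case False
        hence "f \<in> M2" using f by auto
        thus ?thesis using e2 ef assms(2) unfolding good_def by auto
      qed
    qed
  qed
qed

lemma good_card_union:
  assumes "good m M1" "good m M2" "\<forall>e\<in>M1. \<forall>f\<in>M2. \<forall>x\<in>e. \<forall>y\<in>f. x < y"
  shows "card (M1 \<union> M2) = card M1 + card M2"
  using good_union[OF assms] assms(1,2) unfolding good_def by (simp add: card_Un_disjoint)

lemma rain_vert: "e \<in> rain u h \<Longrightarrow> x \<in> e \<Longrightarrow> u \<le> x \<and> x < u + 2*h"
  unfolding rain_def by auto

lemma rain_good:
  assumes "0 \<le> u" "u + 2*h \<le> 2 * int m"
  shows "good m (rain u h)" "card (rain u h) = nat h"
proof -
  define f where "f = (\<lambda>i. {u + i, u + 2*h - 1 - i})"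
  have R: "rain u h = f ` {0..<h}" unfolding rain_def f_def by auto
  have inj: "inj_on f {0..<h}"
  proof (rule inj_onI)
    fix i j assume i: "i \<in> {0..<h}" and j: "j \<in> {0..<h}" and e: "f i = f j"
    have "u + i \<in> f j" using e unfolding f_def by auto
    thus "i = j" using i j unfolding f_def by auto
  qed
  show "card (rain u h) = nat h" unfolding R card_image[OF inj] by simp
  show "good m (rain u h)" unfolding good_def
  proof (intro conjI ballI impI)
    show "rain u h \<subseteq> ck_edges m"
    proof
      fix e assume "e \<in> rain u h"
      then obtain i where i: "i \<in> {0..<h}" "e = f i" unfolding R by auto
      show "e \<in> ck_edges m" unfolding ck_edges_iff i(2) f_def
        by (rule exI[of _ "u+i"], rule exI[of _ "u + 2*h - 1 - i"]) (use i(1) assms in auto)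
    qed
    show "finite (rain u h)" unfolding R by simp
    fix e g assume e: "e \<in> rain u h" and g: "g \<in> rain u h" and ne: "e \<noteq> g"
    obtain i where i: "0 \<le> i" "i < h" "e = {u + i, u + 2*h - 1 - i}" using e unfolding rain_def by auto
    obtain j where j: "0 \<le> j" "j < h" "g = {u + j, u + 2*h - 1 - j}" using g unfolding rain_def by auto
    have ij: "i \<noteq> j" using ne i j by auto
    have d: "e \<inter> g = {}" using i j ij by auto
    have "btw (u+i) (u + 2*h - 1 - i) (u + j) = btw (u+i) (u + 2*h - 1 - i) (u + 2*h - 1 - j)"
      unfolding btw_def using i j ij by auto
    hence "\<not> crosses e g" unfolding i(3) j(3) crosses_iff by auto
    thus "disjoint_edges e g" using d unfolding disjoint_edges_def by auto
  qed
qed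


lemma seg_eq_cases:
  assumes "seg m a b = seg m a' b'"
  shows "(2*int m dvd a - a' \<and> 2*int m dvd b - b') \<or> (2*int m dvd a - b' \<and> 2*int m dvd b - a')"
  using assms unfolding seg_def doubleton_eq_iff mod_eq_dvd_iff .

lemma dvd_small: fixes x n :: int assumes "n dvd x" "\<bar>x\<bar> < n" shows "x = 0"
proof (rule ccontr)
  assume "x \<noteq> 0"
  hence "\<bar>n\<bar> \<le> \<bar>x\<bar>" using assms(1) by (rule dvd_imp_le_int)
  thus False using assms(2) by arith
qed

lemma seg_inj_d:
  assumes "0 \<le> d" "d < int m" "0 \<le> d'" "d' < int m" "seg m (y-d) (y+1+d) = seg m (y-d') (y+1+d')"
  shows "d = d'"
proof -
  from seg_eq_cases[OF assms(5)] show ?thesis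
  proof
    assume "2*int m dvd (y-d) - (y-d') \<and> 2*int m dvd (y+1+d) - (y+1+d')"
    hence "2*int m dvd d' - d" by (simp add: algebra_simps)
    thus ?thesis using dvd_small[of "2*int m" "d'-d"] assms by auto
  next
    assume "2*int m dvd (y-d) - (y+1+d') \<and> 2*int m dvd (y+1+d) - (y-d')"
    hence "2*int m dvd d+d'+1" by (simp add: algebra_simps)
    hence "d+d'+1 = 0" using dvd_small[of "2*int m" "d+d'+1"] assms by auto
    thus ?thesis using assms by auto
  qed
qed

lemma class_disj:
  assumes "\<bar>y - y'\<bar> < int m" "y \<noteq> y'" "seg m (y-d) (y+1+d) = seg m (y'-d') (y'+1+d')"
  shows False
proof -
  have "2*int m dvd 2*y - 2*y'"
  proof (rule disjE[OF seg_eq_cases[OF assms(3)]])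
    assume h: "2*int m dvd (y-d) - (y'-d') \<and> 2*int m dvd (y+1+d) - (y'+1+d')"
    have "2*int m dvd ((y-d) - (y'-d')) + ((y+1+d) - (y'+1+d'))" by (rule dvd_add[OF conjunct1[OF h] conjunct2[OF h]])
    moreover have "((y-d) - (y'-d')) + ((y+1+d) - (y'+1+d')) = 2*y - 2*y'" by simp
    ultimately show ?thesis by metis
  next
    assume h: "2*int m dvd (y-d) - (y'+1+d') \<and> 2*int m dvd (y+1+d) - (y'-d')"
    have "2*int m dvd ((y-d) - (y'+1+d')) + ((y+1+d) - (y'-d'))" by (rule dvd_add[OF conjunct1[OF h] conjunct2[OF h]])
    moreover have "((y-d) - (y'+1+d')) + ((y+1+d) - (y'-d')) = 2*y - 2*y'" by simp
    ultimately show ?thesis by metis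
  qed
  moreover have "2*y - 2*y' = 2 * (y - y')" by simp
  ultimately have "2 * int m dvd 2 * (y - y')" by metis
  hence "int m dvd y - y'" by (metis dvd_times_left_cancel_iff zero_neq_numeral)
  thus False using dvd_small[of "int m" "y - y'"] assms by auto
qed

definition PC :: "nat \<Rightarrow> int \<Rightarrow> int set set" where
  "PC m y = (\<lambda>d. seg m (y-d) (y+1+d)) ` {0..<int m}"

lemma seg_in_range: "0 \<le> a \<Longrightarrow> a < 2*int m \<Longrightarrow> 0 \<le> b \<Longrightarrow> b < 2*int m \<Longrightarrow> seg m a b = {a,b}"
  unfolding seg_def by simp

lemma blocking_hits: "blocking_set m B \<Longrightarrow> is_SPM m M \<Longrightarrow> \<exists>e\<in>M. e \<in> B"
  unfolding blocking_set_def by blast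

lemma PC_hit:
  assumes "m \<ge> 1" "blocking_set m B"
  shows "\<exists>d. 0 \<le> d \<and> d < int m \<and> seg m (y-d) (y+1+d) \<in> B"
proof -
  have g: "good m (rain 0 (int m))" and c: "card (rain 0 (int m)) = m" using rain_good[of 0 "int m" m] by auto
  have "is_SPM m (rain 0 (int m))" using g c SPM_good by auto
  hence "is_SPM m (rot m (y - int m + 1) ` rain 0 (int m))" using SPM_rot assms(1) by blast
  then obtain e where e: "e \<in> rot m (y - int m + 1) ` rain 0 (int m)" "e \<in> B" using blocking_hits[OF assms(2)] by blast
  then obtain i where i: "0 \<le> i" "i < int m" "e = rot m (y - int m + 1) {i, 2*int m - 1 - i}"
    unfolding rain_def by auto
  have "{i, 2*int m - 1 - i} = seg m i (2*int m - 1 - i)" using i by (simp add: seg_in_range)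
  hence "e = seg m (i + (y - int m + 1)) (2*int m - 1 - i + (y - int m + 1))" using i(3) seg_rot by simp
  also have "\<dots> = seg m (y - (int m - 1 - i)) (y + 1 + (int m - 1 - i))" by (simp add: algebra_simps)
  finally show ?thesis using e(2) i by (intro exI[of _ "int m - 1 - i"]) auto
qed

lemma card_classes:
  assumes "m \<ge> 1" "blocker m B"
  shows "\<And>y. y0 \<le> y \<Longrightarrow> y < y0 + int m \<Longrightarrow> card (B \<inter> PC m y) = 1"
    and "B = (\<Union>y\<in>{y0..<y0 + int m}. B \<inter> PC m y)"
proof -
  have bs: "blocking_set m B" "finite B" "card B = m" using assms(2) unfolding blocker_def by auto
  let ?I = "{y0..<y0 + int m}"
  let ?F = "\<lambda>y. B \<inter> PC m y"
  have fin: "\<And>y. finite (?F y)" using bs(2) by auto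
  have nonempty: "\<And>y. ?F y \<noteq> {}" using PC_hit[OF assms(1) bs(1)] unfolding PC_def by fastforce
  have c1: "\<And>y. card (?F y) \<ge> 1" using fin nonempty by (simp add: Suc_le_eq card_gt_0_iff)
  have disj: "\<forall>y\<in>?I. \<forall>y'\<in>?I. y \<noteq> y' \<longrightarrow> ?F y \<inter> ?F y' = {}"
  proof (intro ballI impI)
    fix y y' assume y: "y \<in> ?I" "y' \<in> ?I" "y \<noteq> y'"
    show "?F y \<inter> ?F y' = {}"
    proof (rule ccontr)
      assume "?F y \<inter> ?F y' \<noteq> {}"
      then obtain d d' where "seg m (y-d) (y+1+d) = seg m (y'-d') (y'+1+d')" unfolding PC_def by auto
      moreover have "\<bar>y - y'\<bar> < int m" using y by auto
      ultimately show False using class_disj[of y y' m d d'] y by auto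
    qed
  qed
  have cardU: "card (\<Union>y\<in>?I. ?F y) = (\<Sum>y\<in>?I. card (?F y))"
    by (rule card_UN_disjoint) (use disj fin in auto)
  have sub: "(\<Union>y\<in>?I. ?F y) \<subseteq> B" by auto
  have le: "(\<Sum>y\<in>?I. card (?F y)) \<le> m" using card_mono[OF bs(2) sub] cardU bs(3) by simp
  have cI: "card ?I = m" by simp
  show "\<And>y. y0 \<le> y \<Longrightarrow> y < y0 + int m \<Longrightarrow> card (B \<inter> PC m y) = 1"
  proof (rule ccontr)
    fix y assume y: "y0 \<le> y" "y < y0 + int m" "card (B \<inter> PC m y) \<noteq> 1"
    hence c2: "card (?F y) \<ge> 2" using c1[of y] by linarith
    have yI: "y \<in> ?I" using y by auto
    have "(\<Sum>y\<in>?I. card (?F y)) = card (?F y) + (\<Sum>y\<in>?I - {y}. card (?F y))"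
      using sum.remove[OF _ yI] by simp
    also have "(\<Sum>y\<in>?I - {y}. card (?F y)) \<ge> (\<Sum>y\<in>?I - {y}. 1)" by (rule sum_mono) (use c1 in auto)
    moreover have "(\<Sum>y\<in>?I - {y}. (1::nat)) = m - 1" using yI cI by simp
    ultimately have "(\<Sum>y\<in>?I. card (?F y)) \<ge> m + 1" using c2 assms(1) by linarith
    thus False using le by simp
  qed
  have ge: "(\<Sum>y\<in>?I. card (?F y)) \<ge> m"
  proof -
    have "(\<Sum>y\<in>?I. card (?F y)) \<ge> (\<Sum>y\<in>?I. 1)" by (rule sum_mono) (use c1 in auto)
    thus ?thesis using cI by simp
  qed
  show "B = (\<Union>y\<in>?I. ?F y)"
    using card_subset_eq[OF bs(2) sub] cardU le ge bs(3) by simp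
qed


definition rho :: "nat \<Rightarrow> int set set \<Rightarrow> int \<Rightarrow> int" where
  "rho m B y = (THE d. 0 \<le> d \<and> d < int m \<and> seg m (y-d) (y+1+d) \<in> B)"

lemma seg_swap: "seg m a b = seg m b a" unfolding seg_def by auto
lemma seg_shift: "seg m (a + 2*int m) b = seg m a b" "seg m a (b + 2*int m) = seg m a b"
  unfolding seg_def by auto

context
  fixes m :: nat and B :: "int set set"
  assumes m2: "m \<ge> 2" and bl: "blocker m B"
begin

lemma bs: "blocking_set m B" "finite B" "card B = m" using bl unfolding blocker_def by auto

lemma rho_unique:
  assumes "0 \<le> d" "d < int m" "seg m (y-d) (y+1+d) \<in> B" "0 \<le> d'" "d' < int m" "seg m (y-d') (y+1+d') \<in> B"
  shows "d = d'"
proof -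
  have c: "card (B \<inter> PC m y) = 1" using card_classes(1)[of m B y y] m2 bl by auto
  have "seg m (y-d) (y+1+d) \<in> B \<inter> PC m y" "seg m (y-d') (y+1+d') \<in> B \<inter> PC m y"
    using assms unfolding PC_def by auto
  hence "seg m (y-d) (y+1+d) = seg m (y-d') (y+1+d')" using c by (metis card_1_singletonE singletonD)
  thus ?thesis using seg_inj_d assms by blast
qed

lemma rho_spec: "0 \<le> rho m B y \<and> rho m B y < int m \<and> seg m (y - rho m B y) (y+1+rho m B y) \<in> B"
proof -
  obtain d where d: "0 \<le> d" "d < int m" "seg m (y-d) (y+1+d) \<in> B" using PC_hit[of m B y] m2 bs by auto
  show ?thesis unfolding rho_def
    by (rule theI[of _ d]) (use d rho_unique in blast)+
qed

lemma rho_eq: "0 \<le> d \<Longrightarrow> d < int m \<Longrightarrow> seg m (y-d) (y+1+d) \<in> B \<Longrightarrow> rho m B y = d"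
  using rho_spec[of y] rho_unique by blast

lemma rho_m: "rho m B (y + int m) = int m - 1 - rho m B y"
proof -
  let ?r = "rho m B y"
  have "seg m (y + int m - (int m - 1 - ?r)) (y + int m + 1 + (int m - 1 - ?r)) = seg m (y+1+?r) ((y - ?r) + 2*int m)"
    by (simp add: algebra_simps)
  also have "\<dots> = seg m (y - ?r) (y+1+?r)" using seg_shift seg_swap by metis
  finally show ?thesis using rho_spec[of y] by (intro rho_eq) auto
qed

lemma rho_2m: "rho m B (y + 2*int m) = rho m B y"
proof -
  let ?r = "rho m B y"
  have "seg m (y + 2*int m - ?r) (y + 2*int m + 1 + ?r) = seg m (y - ?r) (y+1+?r)"
    using seg_shift by (metis add.commute add.left_commute diff_add_eq)
  thus ?thesis using rho_spec[of y] by (intro rho_eq) auto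
qed

lemma B_classes: "e \<in> B \<Longrightarrow> \<exists>y. e = seg m (y - rho m B y) (y+1+rho m B y)"
proof -
  assume e: "e \<in> B"
  have "B = (\<Union>y\<in>{0..<0 + int m}. B \<inter> PC m y)" using card_classes(2)[of m B 0] m2 bl by auto
  then obtain y where "e \<in> PC m y" using e by auto
  then obtain d where d: "0 \<le> d" "d < int m" "e = seg m (y-d) (y+1+d)" unfolding PC_def by auto
  hence "rho m B y = d" using e rho_eq by auto
  thus ?thesis using d by auto
qed

lemma D_cond:
  assumes l: "1 \<le> l" "l \<le> int m - 2" and le: "rho m B (x+1) \<le> l" "l \<le> rho m B x"
  shows "rho m B (x + l + 1) = 0"
proof -
  let ?M1 = "rain 0 l" and ?M2 = "rain (2*l) 1" and ?M3 = "rain (2*l+2) (int m - 1 - l)"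
  have g1: "good m ?M1" "card ?M1 = nat l" using rain_good[of 0 l m] l by auto
  have g2: "good m ?M2" "card ?M2 = 1" using rain_good[of "2*l" 1 m] l by auto
  have g3: "good m ?M3" "card ?M3 = nat (int m - 1 - l)" using rain_good[of "2*l+2" "int m - 1 - l" m] l by auto
  have s12: "\<forall>e\<in>?M1. \<forall>f\<in>?M2. \<forall>x\<in>e. \<forall>y\<in>f. x < y"
  proof (intro ballI)
    fix e f x y assume "e \<in> ?M1" "f \<in> ?M2" "x \<in> e" "y \<in> f"
    thus "x < y" using rain_vert[of e 0 l x] rain_vert[of f "2*l" 1 y] by auto
  qed
  have g12: "good m (?M1 \<union> ?M2)" "card (?M1 \<union> ?M2) = nat l + 1"
    using good_union(1)[OF g1(1) g2(1) s12] good_card_union[OF g1(1) g2(1) s12] g1 g2 by auto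
  have s123: "\<forall>e\<in>?M1 \<union> ?M2. \<forall>f\<in>?M3. \<forall>x\<in>e. \<forall>y\<in>f. x < y"
  proof (intro ballI)
    fix e f x y assume "e \<in> ?M1 \<union> ?M2" "f \<in> ?M3" "x \<in> e" "y \<in> f"
    thus "x < y" using rain_vert[of e 0 l x] rain_vert[of e "2*l" 1 x] rain_vert[of f "2*l+2" "int m - 1 - l" y] by auto
  qed
  have g123: "good m (?M1 \<union> ?M2 \<union> ?M3)" "card (?M1 \<union> ?M2 \<union> ?M3) = m"
    using good_union(1)[OF g12(1) g3(1) s123] good_card_union[OF g12(1) g3(1) s123] g12 g3 l by auto
  let ?r = "x - l + 1"
  have "is_SPM m (rot m ?r ` (?M1 \<union> ?M2 \<union> ?M3))"
    using SPM_rot[of m "?M1 \<union> ?M2 \<union> ?M3" ?r] g123 m2 SPM_good by auto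
  then obtain e where e: "e \<in> rot m ?r ` (?M1 \<union> ?M2 \<union> ?M3)" "e \<in> B" using blocking_hits[OF bs(1)] by blast
  then obtain e0 where e0: "e0 \<in> ?M1 \<union> ?M2 \<union> ?M3" "e = rot m ?r e0" by blast
  have segrng: "\<And>a b. 0 \<le> a \<Longrightarrow> a < 2*int m \<Longrightarrow> 0 \<le> b \<Longrightarrow> b < 2*int m \<Longrightarrow> rot m ?r {a,b} = seg m (a + ?r) (b + ?r)"
    using seg_in_range seg_rot by metis
  consider (a) "e0 \<in> ?M1" | (b) "e0 \<in> ?M2" | (c) "e0 \<in> ?M3" using e0 by blast
  then show ?thesis
  proof cases
    case a
    then obtain i where i: "0 \<le> i" "i < l" "e0 = {i, 2*l - 1 - i}" unfolding rain_def by auto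
    have "e = seg m (i + ?r) (2*l - 1 - i + ?r)" using e0(2) i segrng[of i "2*l-1-i"] l by auto
    also have "\<dots> = seg m (x - (l - 1 - i)) (x + 1 + (l - 1 - i))" by (simp add: algebra_simps)
    finally have "rho m B x = l - 1 - i" using e(2) i l by (intro rho_eq) auto
    thus ?thesis using le i by auto
  next
    case b
    hence "e0 = {2*l, 2*l+1}" unfolding rain_def by auto
    hence "e = seg m (2*l + ?r) (2*l+1 + ?r)" using e0(2) segrng[of "2*l" "2*l+1"] l by auto
    also have "\<dots> = seg m ((x+l+1) - 0) ((x+l+1) + 1 + 0)" by (simp add: algebra_simps)
    finally show ?thesis using e(2) m2 by (intro rho_eq) auto
  next
    case c
    then obtain i where i: "0 \<le> i" "i < int m - 1 - l" "e0 = {2*l+2+i, 2*l+2 + 2*(int m - 1 - l) - 1 - i}"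
      unfolding rain_def by auto
    have "e = seg m (2*l+2+i + ?r) (2*l+2 + 2*(int m - 1 - l) - 1 - i + ?r)"
      using e0(2) i segrng[of "2*l+2+i" "2*l+2 + 2*(int m - 1 - l) - 1 - i"] l by auto
    also have "\<dots> = seg m ((x + int m + 1) - (int m - l - 2 - i)) ((x + int m + 1) + 1 + (int m - l - 2 - i))"
      by (simp add: algebra_simps)
    finally have "rho m B (x + int m + 1) = int m - l - 2 - i" using e(2) i l by (intro rho_eq) auto
    moreover have "rho m B (x + int m + 1) = int m - 1 - rho m B (x+1)" using rho_m[of "x+1"] by (simp add: algebra_simps)
    ultimately show ?thesis using le i by auto
  qed
qed

end


lemma discrete_step:
  fixes a b :: int
  assumes "a < b" "P a" "\<not> P b"
  shows "\<exists>y. a \<le> y \<and> y < b \<and> P y \<and> \<not> P (y+1)"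
proof -
  let ?S = "{y. a \<le> y \<and> y < b \<and> P y}"
  have fin: "finite ?S" by (rule finite_subset[of _ "{a..<b}"]) auto
  have ne: "a \<in> ?S" using assms by auto
  define y where "y = Max ?S"
  have y: "y \<in> ?S" unfolding y_def using Max_in[OF fin] ne by blast
  have "\<not> P (y+1)"
  proof
    assume p: "P (y+1)"
    show False
    proof (cases "y + 1 < b")
      case True
      hence "y + 1 \<in> ?S" using y p by auto
      hence "y + 1 \<le> y" unfolding y_def using Max_ge[OF fin] by blast
      thus False by simp
    next
      case False
      hence "y + 1 = b" using y by auto
      thus False using p assms by auto
    qed
  qed
  thus ?thesis using y by auto
qed

lemma mono_steps:
  fixes f :: "int \<Rightarrow> int"
  assumes "\<forall>y. a \<le> y \<and> y < b \<longrightarrow> f y < f (y+1)" "a \<le> c" "c \<le> b"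
  shows "f c \<ge> f a + (c - a)"
proof -
  have "\<forall>k::nat. a + int k \<le> b \<longrightarrow> f (a + int k) \<ge> f a + int k"
  proof
    fix k :: nat
    show "a + int k \<le> b \<longrightarrow> f (a + int k) \<ge> f a + int k"
    proof (induction k)
      case 0 then show ?case by simp
    next
      case (Suc k)
      show ?case
      proof
        assume h: "a + int (Suc k) \<le> b"
        hence "f (a + int k) < f (a + int k + 1)" using assms(1) by auto
        moreover have "f (a + int k) \<ge> f a + int k" using Suc h by auto
        ultimately have i: "f (a + int k + 1) \<ge> f a + int k + 1" by linarith
        have e: "a + int (Suc k) = a + int k + 1" by simp
        show "f (a + int (Suc k)) \<ge> f a + int (Suc k)" unfolding e using i by simp
      qed
    qed
  qed
  from this[rule_format, of "nat (c - a)"] show ?thesis using assms by simp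
qed

context
  fixes m :: nat and \<rho> :: "int \<Rightarrow> int"
  assumes m2: "m \<ge> 2"
    and R: "\<And>y. 0 \<le> \<rho> y \<and> \<rho> y \<le> int m - 1"
    and A: "\<And>y. \<rho> (y + int m) = int m - 1 - \<rho> y"
    and D: "\<And>x l. 1 \<le> l \<Longrightarrow> l \<le> int m - 2 \<Longrightarrow> \<rho> (x+1) \<le> l \<Longrightarrow> l \<le> \<rho> x \<Longrightarrow> \<rho> (x+l+1) = 0"
begin

lemma P2: "\<rho> (y + 2 * int m) = \<rho> y"
  using A[of y] A[of "y + int m"] by (simp add: algebra_simps)

lemma Am: "\<rho> (y - int m) = int m - 1 - \<rho> y"
  using A[of "y - int m"] by simp

lemma U: assumes "1 \<le> l" "l \<le> int m - 2" "\<rho> x \<le> l" "l \<le> \<rho> (x+1)" shows "\<rho> (x - l) = 0"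
proof -
  have "\<rho> (x + int m + (int m - 1 - l) + 1) = 0"
    using D[of "int m - 1 - l" "x + int m"] A[of x] A[of "x+1"] assms by (simp add: algebra_simps)
  moreover have "x + int m + (int m - 1 - l) + 1 = (x - l) + 2 * int m" by simp
  ultimately show ?thesis using P2 by metis
qed

abbreviation \<sigma> where "\<sigma> y \<equiv> y - \<rho> y"

lemma zero_exists: "\<exists>z. \<rho> z = 0"
proof (rule ccontr)
  assume nz: "\<not> (\<exists>z. \<rho> z = 0)"
  have nt: "\<rho> y \<noteq> int m - 1" for y
  proof
    assume "\<rho> y = int m - 1"
    hence "\<rho> (y + int m) = 0" using A by simp
    thus False using nz by blast
  qed
  have "\<exists>x. \<rho> (x+1) \<le> \<rho> x"
  proof (rule ccontr)
    assume "\<not> (\<exists>x. \<rho> (x+1) \<le> \<rho> x)"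
    hence "\<forall>y. 0 \<le> y \<and> y < 2 * int m \<longrightarrow> \<rho> y < \<rho> (y+1)" by (meson not_le)
    hence "\<rho> (2 * int m) \<ge> \<rho> 0 + 2 * int m" using mono_steps[of 0 "2*int m" \<rho> "2*int m"] by simp
    thus False using P2[of 0] m2 by simp
  qed
  then obtain x where x: "\<rho> (x+1) \<le> \<rho> x" by blast
  have r1: "\<rho> x \<noteq> 0" "\<rho> x \<noteq> int m - 1" using nz nt by auto
  have "1 \<le> \<rho> x" "\<rho> x \<le> int m - 2" using R[of x] r1 by presburger+
  hence "\<rho> (x + \<rho> x + 1) = 0" using D[of "\<rho> x" x] x by auto
  thus False using nz by blast
qed


lemma sweep:
  assumes "z < X" "\<rho> z = 0" "\<forall>y. z \<le> y \<and> y < X \<longrightarrow> \<rho> y < \<rho> (y+1)"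
    "\<sigma> X - 1 \<le> q" "q \<le> z - 1" "X - int m + 1 \<le> q"
  shows "\<rho> q = 0"
proof -
  obtain y where y: "z \<le> y" "y < X" "\<sigma> y \<ge> q" "\<sigma> (y+1) \<le> q + 1"
  proof (cases "\<sigma> X \<ge> q")
    case True
    have "\<rho> (X - 1) < \<rho> X" using assms(3)[rule_format, of "X-1"] assms(1) by simp
    hence "\<sigma> (X - 1) \<ge> q" using True by linarith
    thus ?thesis using that[of "X - 1"] assms by auto
  next
    case False
    obtain y where "z \<le> y" "y < X" "\<sigma> y \<ge> q" "\<not> (\<sigma> (y+1) \<ge> q)"
      using discrete_step[of z X "\<lambda>y. \<sigma> y \<ge> q"] False assms by auto
    thus ?thesis using that[of y] by auto
  qed
  let ?l = "y - q"
  have "\<rho> (y+1) \<le> int m - 1" using R by blast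
  have "\<rho> (y - ?l) = 0" using U[of ?l y] y assms by auto
  thus ?thesis by simp
qed

lemma main_comb:
  "\<exists>z T. \<rho> z = 0 \<and> \<rho> T = int m - 1 \<and> z < T \<and> (\<forall>y. z \<le> y \<and> y < T \<longrightarrow> \<rho> y < \<rho> (y+1))
     \<and> (\<forall>q. T - int m \<le> q \<and> q \<le> z \<longrightarrow> \<rho> q = 0)"
proof -
  obtain z0 where z0: "\<rho> z0 = 0" using zero_exists by blast
  have top0: "\<rho> (z0 + int m) = int m - 1" using A[of z0] z0 by simp
  let ?S = "{y. z0 \<le> y \<and> y \<le> z0 + int m \<and> \<rho> y = 0}"
  have finS: "finite ?S" by (rule finite_subset[of _ "{z0..z0 + int m}"]) auto
  define z where "z = Max ?S"
  have z0S: "z0 \<in> ?S" using z0 by simp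
  have zS: "z \<in> ?S" unfolding z_def by (rule Max_in[OF finS]) (use z0S in blast)
  have zmax: "\<And>y. y \<in> ?S \<Longrightarrow> y \<le> z" unfolding z_def using Max_ge[OF finS] by blast
  have zlt: "z < z0 + int m" using zS top0 m2 by (cases "z = z0 + int m") auto
  let ?S' = "{y. z < y \<and> y \<le> z0 + int m \<and> \<rho> y = int m - 1}"
  have finS': "finite ?S'" by (rule finite_subset[of _ "{z..z0 + int m}"]) auto
  define T where "T = Min ?S'"
  have TS: "T \<in> ?S'" unfolding T_def by (rule Min_in[OF finS']) (use zlt top0 in auto)
  have Tmin: "\<And>y. y \<in> ?S' \<Longrightarrow> T \<le> y" unfolding T_def using Min_le[OF finS'] by blast
  have z: "\<rho> z = 0" using zS by auto
  have T: "\<rho> T = int m - 1" "z < T" "T \<le> z0 + int m" using TS by auto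
  have between: "1 \<le> \<rho> y \<and> \<rho> y \<le> int m - 2" if "z < y" "y < T" for y
  proof -
    have "\<rho> y \<noteq> 0"
    proof
      assume "\<rho> y = 0"
      hence "y \<in> ?S" using that T zS by auto
      thus False using zmax that by fastforce
    qed
    moreover have "\<rho> y \<noteq> int m - 1"
    proof
      assume "\<rho> y = int m - 1"
      hence "y \<in> ?S'" using that T by auto
      thus False using Tmin that by fastforce
    qed
    ultimately show ?thesis using R[of y] by presburger
  qed
  have inc: "\<forall>y. z \<le> y \<and> y < T \<longrightarrow> \<rho> y < \<rho> (y+1)"
  proof (rule ccontr)
    assume "\<not> ?thesis"
    then obtain y0 where y0: "z \<le> y0" "y0 < T" "\<rho> (y0+1) \<le> \<rho> y0" by (auto simp: not_less)
    let ?NA = "{y. z \<le> y \<and> y < T \<and> \<rho> (y+1) \<le> \<rho> y}"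
    have finNA: "finite ?NA" by (rule finite_subset[of _ "{z..<T}"]) auto
    define x where "x = Min ?NA"
    have xNA: "x \<in> ?NA" unfolding x_def by (rule Min_in[OF finNA]) (use y0 in auto)
    have xmin: "\<And>y. y \<in> ?NA \<Longrightarrow> x \<le> y" unfolding x_def using Min_le[OF finNA] by blast
    have incx: "\<forall>y. z \<le> y \<and> y < x \<longrightarrow> \<rho> y < \<rho> (y+1)"
    proof (intro allI impI)
      fix y assume y: "z \<le> y \<and> y < x"
      hence "y \<notin> ?NA" using xmin by fastforce
      thus "\<rho> y < \<rho> (y+1)" using y xNA by auto
    qed
    have x1: "z \<le> x" "x < T" "\<rho> (x+1) \<le> \<rho> x" using xNA by auto
    have zx: "z < x"
    proof (rule ccontr)
      assume "\<not> z < x"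
      hence "x = z" using x1 by auto
      hence "\<rho> (z+1) \<le> 0" using x1 z by auto
      moreover have "z + 1 \<le> T" using T by auto
      ultimately show False using between[of "z+1"] T m2 by (cases "z + 1 = T") auto
    qed
    have rx: "1 \<le> \<rho> x" "\<rho> x \<le> int m - 2" using between zx x1 by auto
    have x1T: "x + 1 < T"
    proof (rule ccontr)
      assume "\<not> x + 1 < T"
      hence "x + 1 = T" using x1 by auto
      thus False using x1 rx T by auto
    qed
    define r where "r = \<rho> x"
    have p0: "\<rho> (x + r + 1) = 0" unfolding r_def using D[of "\<rho> x" x] rx x1 by auto
    define q where "q = x + r + 1 - int m"
    have qm: "q + int m = x + r + 1" unfolding q_def by simp
    have rq: "\<rho> q = int m - 1" using A[of q] p0 qm by simp
    have i: "q \<le> z"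
    proof (rule ccontr)
      assume "\<not> q \<le> z"
      moreover have "q < T" using q_def rx r_def x1 by auto
      ultimately show False using between[of q] rq by auto
    qed
    have ii: "q < \<sigma> x - 1"
    proof (rule ccontr)
      assume h: "\<not> q < \<sigma> x - 1"
      show False
      proof (cases "q = z")
        case True thus False using rq z m2 by auto
      next
        case False
        hence "\<rho> q = 0" using sweep[of z x q] zx z incx h i rx unfolding r_def q_def by auto
        thus False using rq m2 by auto
      qed
    qed
    have iii: "T - int m + 1 \<le> q"
    proof (rule ccontr)
      assume "\<not> T - int m + 1 \<le> q"
      hence "q + int m \<le> T" by auto
      moreover have "z < q + int m" using qm zx r_def rx by auto
      ultimately show False using between[of "q + int m"] p0 qm T m2 by (cases "q + int m = T") auto
    qed
    have s1: "\<sigma> (x+1) > q" using ii x1 r_def by auto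
    have s2: "\<not> (\<sigma> T > q)" using T iii by auto
    have "\<exists>y. x + 1 \<le> y \<and> y < T \<and> \<sigma> y > q \<and> \<not> (\<sigma> (y+1) > q)"
      by (rule discrete_step[of "x+1" T "\<lambda>y. \<sigma> y > q"]) (use x1T s1 s2 in auto)
    then obtain y where y: "x + 1 \<le> y" "y < T" "\<sigma> y > q" "\<not> (\<sigma> (y+1) > q)" by blast
    have lm: "y - q \<le> int m - 2"
    proof (cases "y + 1 = T")
      case True thus ?thesis using iii by auto
    next
      case False
      hence "\<rho> (y+1) \<le> int m - 2" using between[of "y+1"] y zx by auto
      thus ?thesis using y by auto
    qed
    have "\<rho> (y - (y - q)) = 0" using U[of "y - q" y] y lm ii rx r_def by auto
    thus False using rq m2 by auto
  qed
  have zeros: "\<forall>q. T - int m \<le> q \<and> q \<le> z \<longrightarrow> \<rho> q = 0"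
  proof (intro allI impI)
    fix q assume q: "T - int m \<le> q \<and> q \<le> z"
    show "\<rho> q = 0"
    proof (cases "q = z")
      case True thus ?thesis using z by simp
    next
      case False
      show ?thesis
      proof (cases "q = T - int m")
        case True thus ?thesis using Am[of T] T by simp
      next
        case False
        show ?thesis by (rule sweep[of z T q]) (use T z inc q \<open>q \<noteq> z\<close> False in auto)
      qed
    qed
  qed
  show ?thesis using z T inc zeros by blast
qed

end


context
  fixes m :: nat and p :: "int \<Rightarrow> int" and t :: int and e :: "int \<Rightarrow> int"
  assumes m2: "m \<ge> 2"
    and P1: "\<And>v. 0 \<le> v \<Longrightarrow> v < 2*int m \<Longrightarrow> 0 \<le> p v \<and> p v < 2*int m \<and> p v \<noteq> v \<and> p (p v) = v"
    and P2: "\<And>a c. 0 \<le> a \<Longrightarrow> a < 2*int m \<Longrightarrow> 0 \<le> c \<Longrightarrow> c < 2*int m \<Longrightarrow> \<not> (a < c \<and> c < p a \<and> p a < p c)"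
    and P3: "\<And>k. 1 \<le> k \<Longrightarrow> k \<le> t \<Longrightarrow> p (k-1) \<noteq> k"
    and P4: "\<And>k. t+1 \<le> k \<Longrightarrow> k \<le> int m \<Longrightarrow> 0 \<le> k - 1 - e k \<Longrightarrow> k + e k < 2 * int m \<Longrightarrow> p (k - 1 - e k) \<noteq> k + e k"
    and tb: "2 \<le> t" "t \<le> int m"
    and eb: "\<And>k. t+1 \<le> k \<Longrightarrow> k \<le> int m \<Longrightarrow> 1 \<le> e k \<and> e k \<le> int m - 2"
    and einc: "\<And>k l. t+1 \<le> k \<Longrightarrow> k < l \<Longrightarrow> l \<le> int m \<Longrightarrow> e k < e l"
begin

lemma closed_even:
  assumes "0 \<le> u" "u \<le> v + 1" "v < 2*int m" "\<forall>y. u \<le> y \<and> y \<le> v \<longrightarrow> u \<le> p y \<and> p y \<le> v"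
  shows "even (v - u + 1)"
  using assms
proof (induction "nat (v - u + 1)" arbitrary: u v rule: less_induct)
  case less
  show ?case
  proof (cases "u \<le> v")
    case False
    hence "v - u + 1 = 0" using less.prems(2) by simp
    thus ?thesis by simp
  next
    case True
    define w where "w = p u"
    have ur: "0 \<le> u" "u < 2*int m" using less.prems True by auto
    have pu: "0 \<le> p u \<and> p u < 2*int m \<and> p u \<noteq> u \<and> p (p u) = u" using P1[OF ur] .
    have uv: "u \<le> p u \<and> p u \<le> v" using less.prems(4)[rule_format, of u] True by simp
    have uw: "u < w" "w \<le> v" using pu uv unfolding w_def by auto
    have pw: "p w = u" using pu unfolding w_def by simp
    have c1: "\<forall>y. u+1 \<le> y \<and> y \<le> w-1 \<longrightarrow> u+1 \<le> p y \<and> p y \<le> w-1"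
    proof (intro allI impI)
      fix y assume y: "u+1 \<le> y \<and> y \<le> w-1"
      have py: "u \<le> p y" "p y \<le> v" using less.prems(4) y uw by auto
      have yr: "0 \<le> y" "y < 2*int m" using y uw less.prems by auto
      have ppy: "p (p y) = y" using P1[OF yr] by simp
      have "p y \<noteq> u"
      proof
        assume "p y = u" hence "p (p y) = w" unfolding w_def by simp
        thus False using ppy y by simp
      qed
      moreover have "p y \<noteq> w"
      proof
        assume "p y = w" hence "p (p y) = u" using pw by simp
        thus False using ppy y by simp
      qed
      moreover have ur: "0 \<le> u" "u < 2*int m" using less.prems True by auto
      moreover have "\<not> (w < p y)"
      proof
        assume "w < p y"
        thus False using P2[OF ur(1) ur(2) yr(1) yr(2)] y unfolding w_def by auto
      qed
      ultimately show "u+1 \<le> p y \<and> p y \<le> w-1" using py by auto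
    qed
    have c2: "\<forall>y. w+1 \<le> y \<and> y \<le> v \<longrightarrow> w+1 \<le> p y \<and> p y \<le> v"
    proof (intro allI impI)
      fix y assume y: "w+1 \<le> y \<and> y \<le> v"
      have py: "u \<le> p y" "p y \<le> v" using less.prems(4) y uw by auto
      have yr: "0 \<le> y" "y < 2*int m" using y uw less.prems by auto
      have ppy: "p (p y) = y" using P1[OF yr] by simp
      have "p y \<noteq> u"
      proof
        assume "p y = u" hence "p (p y) = w" unfolding w_def by simp
        thus False using ppy y by simp
      qed
      moreover have "p y \<noteq> w"
      proof
        assume "p y = w" hence "p (p y) = u" using pw by simp
        thus False using ppy y uw by simp
      qed
      moreover have "\<not> (u+1 \<le> p y \<and> p y \<le> w-1)"
      proof
        assume h: "u+1 \<le> p y \<and> p y \<le> w-1"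
        hence "u+1 \<le> p (p y) \<and> p (p y) \<le> w-1" using c1 by blast
        thus False using ppy y by simp
      qed
      ultimately show "w+1 \<le> p y \<and> p y \<le> v" using py by auto
    qed
    have e1: "even ((w-1) - (u+1) + 1)"
      by (rule less.hyps) (use uw less.prems c1 in auto)
    have e2: "even (v - (w+1) + 1)"
      by (rule less.hyps) (use uw less.prems c2 in auto)
    have "v - u + 1 = ((w-1) - (u+1) + 1) + (v - (w+1) + 1) + 2" by simp
    thus ?thesis using e1 e2 by presburger
  qed
qed

lemma edge_odd:
  assumes "0 \<le> v" "v < p v" "p v < 2*int m"
  shows "odd (p v - v)"
proof -
  have cl: "\<forall>y. v+1 \<le> y \<and> y \<le> p v - 1 \<longrightarrow> v+1 \<le> p y \<and> p y \<le> p v - 1"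
  proof (intro allI impI)
    fix y assume y: "v+1 \<le> y \<and> y \<le> p v - 1"
    have yr: "0 \<le> y" "y < 2*int m" using y assms by auto
    have vr: "0 \<le> v" "v < 2*int m" using assms by auto
    have pv: "p (p v) = v" using P1[OF vr] by auto
    have "p y \<noteq> v" using P1[OF yr] y pv by auto
    moreover have "p y \<noteq> p v"
    proof
      assume "p y = p v" hence "p (p y) = p (p v)" by simp
      thus False using P1[OF yr] P1[OF vr] y by simp
    qed
    moreover have "\<not> (p v < p y)" using P2[of v y] y yr vr by auto
    moreover have "\<not> (p y < v)"
    proof
      assume h: "p y < v"
      have "0 \<le> p y" "p y < 2*int m" using P1[OF yr] by auto
      thus False using P2[of "p y" v] h y vr P1[OF yr] by auto
    qed
    ultimately show "v+1 \<le> p y \<and> p y \<le> p v - 1" by auto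
  qed
  have "even ((p v - 1) - (v+1) + 1)" by (rule closed_even) (use assms cl in auto)
  thus ?thesis by presburger
qed

lemma no_inner:
  assumes "0 \<le> a" "a < b" "b \<le> t"
  shows "p a \<noteq> b"
  using assms
proof (induction "nat (b - a)" arbitrary: a b rule: less_induct)
  case less
  show ?case
  proof
    assume pab: "p a = b"
    have ar: "0 \<le> a" "a < 2*int m" using less.prems tb by auto
    have br: "0 \<le> b" "b < 2*int m" using less.prems tb by auto
    have pb: "p b = a" using P1[OF ar] pab by auto
    show False
    proof (cases "b = a + 1")
      case True
      thus False using P3[of b] less.prems pab by auto
    next
      case False
      hence ab: "a + 1 < b" using less.prems by auto
      have a1r: "0 \<le> a+1" "a+1 < 2*int m" using ab br ar by auto
      define w where "w = p (a+1)"
      have wr: "0 \<le> w" "w < 2*int m" "w \<noteq> a+1" "p w = a+1" using P1[OF a1r] unfolding w_def by auto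
      have "w \<noteq> a" using wr pab ab by auto
      moreover have "w \<noteq> b" using wr pb by auto
      moreover have "\<not> (b < w)" using P2[of a "a+1"] ar a1r pab ab unfolding w_def by auto
      moreover have "\<not> (w < a)" using P2[of w a] wr ar pab ab by auto
      ultimately have "a + 1 < w" "w < b" using wr by auto
      hence "p (a+1) \<noteq> w" by (intro less.hyps) (use less.prems in auto)
      thus False unfolding w_def by simp
    qed
  qed
qed

lemma spine_out: assumes "0 \<le> i" "i \<le> t" shows "t < p i"
proof (rule ccontr)
  assume h: "\<not> t < p i"
  have ir: "0 \<le> i" "i < 2*int m" using assms tb by auto
  have pr: "0 \<le> p i" "p i \<noteq> i" "p (p i) = i" using P1[OF ir] by auto
  show False
  proof (cases "i < p i")
    case True thus False using no_inner[of i "p i"] assms h by auto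
  next
    case False
    hence "p i < i" using pr by auto
    thus False using no_inner[of "p i" i] assms pr by auto
  qed
qed

lemma spine_dec: assumes "0 \<le> i" "i < t" shows "p (i+1) < p i"
proof -
  have ir: "0 \<le> i" "i < 2*int m" using assms tb by auto
  have i1r: "0 \<le> i+1" "i+1 < 2*int m" using assms tb by auto
  have o1: "t < p i" "t < p (i+1)" using spine_out assms by auto
  have "p (i+1) \<noteq> p i"
  proof
    assume "p (i+1) = p i" hence "p (p (i+1)) = p (p i)" by simp
    thus False using P1[OF ir] P1[OF i1r] by simp
  qed
  moreover have "\<not> (p i < p (i+1))" using P2[of i "i+1"] ir i1r o1 assms by auto
  ultimately show ?thesis by auto
qed

definition s where "s i = i + p i"

lemma s_mono: assumes "0 \<le> i" "i \<le> j" "j \<le> t" shows "s j \<le> s i"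
proof -
  have "\<forall>k::nat. i + int k \<le> t \<longrightarrow> s (i + int k) \<le> s i"
  proof
    fix k :: nat show "i + int k \<le> t \<longrightarrow> s (i + int k) \<le> s i"
    proof (induction k)
      case 0 thus ?case by simp
    next
      case (Suc k)
      show ?case
      proof
        assume h: "i + int (Suc k) \<le> t"
        have "p (i + int k + 1) < p (i + int k)" using spine_dec[of "i + int k"] h assms by auto
        hence "s (i + int k + 1) \<le> s (i + int k)" unfolding s_def by auto
        moreover have "s (i + int k) \<le> s i" using Suc h by auto
        moreover have e: "i + int (Suc k) = i + int k + 1" by simp
        ultimately show "s (i + int (Suc k)) \<le> s i" unfolding e by linarith
      qed
    qed
  qed
  from this[rule_format, of "nat (j - i)"] show ?thesis using assms by simp
qed

lemma s_odd: assumes "0 \<le> i" "i \<le> t" shows "odd (s i)"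
proof -
  have ir: "0 \<le> i" "i < 2*int m" using assms tb by auto
  have "odd (p i - i)" using edge_odd[of i] spine_out[OF assms] P1[OF ir] assms by auto
  thus ?thesis unfolding s_def by presburger
qed

lemma s_range: assumes "0 \<le> i" "i \<le> t" shows "2*t+1 \<le> s i \<and> s i \<le> 2*int m - 1"
proof -
  have "s t \<le> s i" "s i \<le> s 0" using s_mono assms tb by auto
  moreover have "t < p t" using spine_out[of t] tb by auto
  moreover have "p 0 < 2*int m" using P1[of 0] tb by auto
  ultimately show ?thesis unfolding s_def by auto
qed

lemma t_lt_m: "t < int m"
proof (rule ccontr)
  assume "\<not> t < int m"
  hence "t = int m" using tb by auto
  thus False using s_range[of 0] tb by auto
qed

lemma e_steps: assumes "t+1 \<le> k" "k \<le> k'" "k' \<le> int m" shows "e k + (k' - k) \<le> e k'"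
proof -
  have "\<forall>y. k \<le> y \<and> y < k' \<longrightarrow> e y < e (y+1)" using einc assms by auto
  thus ?thesis using mono_steps[of k k' e k'] assms by auto
qed

definition L where "L k = k - 1 - e k"

lemma L_range: assumes "t+1 \<le> k" "k \<le> int m" shows "1 \<le> L k \<and> L k \<le> t - 1"
proof -
  have "e (t+1) + (k - (t+1)) \<le> e k" using e_steps[of "t+1" k] assms by auto
  moreover have "e k + (int m - k) \<le> e (int m)" using e_steps[of k "int m"] assms by auto
  moreover have "1 \<le> e (t+1)" "e (int m) \<le> int m - 2" using eb[of "t+1"] eb[of "int m"] assms by auto
  ultimately show ?thesis unfolding L_def by auto
qed

lemma L_mono: assumes "t+1 \<le> k" "k \<le> k'" "k' \<le> int m" shows "L k' \<le> L k"
  using e_steps[OF assms] unfolding L_def by auto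

definition g where "g k = (s (L k) + 1) div 2"

lemma g_range: assumes "t+1 \<le> k" "k \<le> int m" shows "t+1 \<le> g k \<and> g k \<le> int m"
  using s_range[of "L k"] L_range[OF assms] unfolding g_def by auto

lemma g_mono: assumes "t+1 \<le> k" "k \<le> k'" "k' \<le> int m" shows "g k \<le> g k'"
proof -
  have "s (L k) \<le> s (L k')" using s_mono[of "L k'" "L k"] L_mono[OF assms] L_range[of k'] L_range[of k] assms by auto
  thus ?thesis unfolding g_def by (simp add: zdiv_mono1)
qed

theorem suff_contra: False
proof -
  let ?S = "{k. t+1 \<le> k \<and> k \<le> int m \<and> g k \<le> k}"
  have fin: "finite ?S" by (rule finite_subset[of _ "{t+1..int m}"]) auto
  have mS: "int m \<in> ?S" using g_range[of "int m"] t_lt_m by auto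
  define k0 where "k0 = Min ?S"
  have k0S: "k0 \<in> ?S" unfolding k0_def by (rule Min_in[OF fin]) (use mS in blast)
  have k0min: "\<And>k. k \<in> ?S \<Longrightarrow> k0 \<le> k" unfolding k0_def using Min_le[OF fin] by blast
  have gk0: "g k0 = k0"
  proof (cases "k0 = t+1")
    case True thus ?thesis using k0S g_range[of k0] by auto
  next
    case False
    hence k1: "t+1 \<le> k0 - 1" using k0S by auto
    have "k0 - 1 \<notin> ?S" using k0min[of "k0-1"] by auto
    hence "g (k0 - 1) > k0 - 1" using k1 k0S by auto
    moreover have "g (k0 - 1) \<le> g k0" using g_mono[of "k0-1" k0] k1 k0S by auto
    ultimately show ?thesis using k0S by auto
  qed
  have Lr: "1 \<le> L k0" "L k0 \<le> t - 1" using L_range[of k0] k0S by auto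
  have so: "odd (s (L k0))" using s_odd[of "L k0"] Lr by auto
  have "s (L k0) = 2 * k0 - 1" using gk0 so unfolding g_def by presburger
  hence "p (L k0) = k0 + e k0" unfolding s_def L_def by auto
  moreover have "0 \<le> k0 - 1 - e k0" using Lr unfolding L_def by auto
  moreover have "k0 + e k0 < 2 * int m" using eb[of k0] k0S by auto
  ultimately show False using P4[of k0] k0S unfolding L_def by auto
qed

end


lemma ck_card2: "e \<in> ck_edges m \<Longrightarrow> card e = 2"
  unfolding ck_edges_iff by auto

lemma SPM_cover: assumes "is_SPM m M" shows "\<Union>M = {0..<2*int m}"
proof -
  have M: "M \<subseteq> ck_edges m" "finite M" "card M = m"
    "\<And>e f. e \<in> M \<Longrightarrow> f \<in> M \<Longrightarrow> e \<noteq> f \<Longrightarrow> disjoint_edges e f"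
    using assms unfolding is_SPM_def by auto
  have pw: "pairwise disjnt M" unfolding pairwise_def disjnt_def using M(4) unfolding disjoint_edges_def by blast
  have fe: "\<And>e. e \<in> M \<Longrightarrow> finite e"
  proof -
    fix e assume "e \<in> M"
    hence "e \<subseteq> {0..<2*int m}" using M(1) ck_sub by blast
    thus "finite e" by (rule finite_subset) simp
  qed
  have "card (\<Union>M) = sum card M" by (rule card_Union_disjoint[OF pw fe])
  also have "\<dots> = sum (\<lambda>_. 2) M" using M(1) ck_card2 by (intro sum.cong) auto
  also have "\<dots> = 2 * m" using M(3) by simp
  finally have c: "card (\<Union>M) = 2 * m" .
  have sub: "\<Union>M \<subseteq> {0..<2*int m}" using M(1) ck_sub by blast
  have "card {0..<2*int m} = 2 * m" by simp
  thus ?thesis using card_subset_eq[OF _ sub] c by simp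
qed

definition partner :: "int set set \<Rightarrow> int \<Rightarrow> int" where
  "partner M v = (THE w. {v,w} \<in> M)"

context
  fixes m :: nat and M :: "int set set"
  assumes spm: "is_SPM m M"
begin

lemma Mck: "M \<subseteq> ck_edges m" using spm unfolding is_SPM_def by auto
lemma Mdisj: "e \<in> M \<Longrightarrow> f \<in> M \<Longrightarrow> e \<noteq> f \<Longrightarrow> disjoint_edges e f" using spm unfolding is_SPM_def by auto

lemma pair_ne: "{v,w} \<in> M \<Longrightarrow> v \<noteq> w"
  using Mck ck_card2[of "{v,w}" m] by (cases "v = w") auto

lemma pair_unique: assumes "{v,w} \<in> M" "{v,w'} \<in> M" shows "w = w'"
proof (rule ccontr)
  assume ne: "w \<noteq> w'"
  hence "{v,w} \<noteq> {v,w'}" using pair_ne[OF assms(1)] by (auto simp: doubleton_eq_iff)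
  hence "{v,w} \<inter> {v,w'} = {}" using Mdisj[OF assms] unfolding disjoint_edges_def by auto
  thus False by auto
qed

lemma partner_ex: assumes "0 \<le> v" "v < 2*int m" shows "\<exists>w. {v,w} \<in> M"
proof -
  have "v \<in> \<Union>M" using SPM_cover[OF spm] assms by auto
  then obtain e where e: "e \<in> M" "v \<in> e" by blast
  have "e \<in> ck_edges m" using e Mck by blast
  then obtain i j where ij: "e = {i,j}" unfolding ck_edges_iff by auto
  show ?thesis
  proof (cases "v = i")
    case True thus ?thesis using e ij by blast
  next
    case False
    hence "v = j" using e ij by auto
    hence "e = {v, i}" using ij by auto
    thus ?thesis using e by blast
  qed
qed

lemma partner_edge: assumes "0 \<le> v" "v < 2*int m" shows "{v, partner M v} \<in> M"
proof -
  obtain w where w: "{v,w} \<in> M" using partner_ex[OF assms] by blast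
  show ?thesis unfolding partner_def
    by (rule theI[of _ w]) (rule w, rule pair_unique[OF _ w], assumption)
qed

lemma partner_eq: assumes "{v,w} \<in> M" shows "partner M v = w"
proof -
  have "{v,w} \<subseteq> {0..<2*int m}" using assms Mck ck_sub by blast
  hence "0 \<le> v" "v < 2*int m" by auto
  hence "{v, partner M v} \<in> M" by (rule partner_edge)
  thus ?thesis using pair_unique assms by blast
qed

lemma partner_P1: assumes "0 \<le> v" "v < 2*int m"
  shows "0 \<le> partner M v \<and> partner M v < 2*int m \<and> partner M v \<noteq> v \<and> partner M (partner M v) = v"
proof -
  have e: "{v, partner M v} \<in> M" using partner_edge[OF assms] .
  have r: "partner M v \<in> {0..<2*int m}" using e Mck ck_sub by blast
  have "{partner M v, v} \<in> M" using e by (simp add: insert_commute)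
  hence "partner M (partner M v) = v" by (rule partner_eq)
  thus ?thesis using r pair_ne[OF e] by auto
qed

lemma partner_P2: assumes "0 \<le> a" "a < 2*int m" "0 \<le> c" "c < 2*int m"
  shows "\<not> (a < c \<and> c < partner M a \<and> partner M a < partner M c)"
proof
  assume h: "a < c \<and> c < partner M a \<and> partner M a < partner M c"
  let ?pa = "partner M a" and ?pc = "partner M c"
  have ea: "{a, ?pa} \<in> M" and ec: "{c, ?pc} \<in> M" using partner_edge assms by auto
  have ne: "{a, ?pa} \<noteq> {c, ?pc}" using h by (auto simp: doubleton_eq_iff)
  have "\<not> crosses {a, ?pa} {c, ?pc}" using Mdisj[OF ea ec ne] unfolding disjoint_edges_def by auto
  moreover have "btw a ?pa c" "\<not> btw a ?pa ?pc" using h unfolding btw_def by auto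
  ultimately show False using h unfolding crosses_iff by auto
qed

end

lemma suff_core:
  fixes m t :: nat and \<epsilon> :: "nat \<Rightarrow> int" and M :: "int set set"
  assumes m2: "m \<ge> 2" and spm: "is_SPM m M" and tb: "2 \<le> t" "t \<le> m"
    and eb: "\<forall>k. t + 1 \<le> k \<and> k \<le> m \<longrightarrow> 1 \<le> \<epsilon> k \<and> \<epsilon> k \<le> int m - 2"
    and einc: "\<forall>k l. t + 1 \<le> k \<and> k < l \<and> l \<le> m \<longrightarrow> \<epsilon> k < \<epsilon> l"
    and av1: "\<And>i. 1 \<le> i \<Longrightarrow> i \<le> t \<Longrightarrow> seg m (int i - 1) (int i) \<notin> M"
    and av2: "\<And>j. 1 \<le> j \<Longrightarrow> j \<le> m - t \<Longrightarrow> seg m (int t + int j - 1 - \<epsilon> (t + j)) (int t + int j + \<epsilon> (t + j)) \<notin> M"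
  shows False
proof (rule suff_contra[of m "partner M" "int t" "\<lambda>k. \<epsilon> (nat k)"])
  show "2 \<le> m" by (rule m2)
  show "\<And>v. 0 \<le> v \<Longrightarrow> v < 2 * int m \<Longrightarrow> 0 \<le> partner M v \<and> partner M v < 2 * int m \<and> partner M v \<noteq> v \<and> partner M (partner M v) = v"
    using partner_P1[OF spm] by blast
  show "\<And>a c. 0 \<le> a \<Longrightarrow> a < 2 * int m \<Longrightarrow> 0 \<le> c \<Longrightarrow> c < 2 * int m \<Longrightarrow> \<not> (a < c \<and> c < partner M a \<and> partner M a < partner M c)"
    using partner_P2[OF spm] by blast
  show "\<And>k. 1 \<le> k \<Longrightarrow> k \<le> int t \<Longrightarrow> partner M (k - 1) \<noteq> k"
  proof
    fix k assume k: "1 \<le> k" "k \<le> int t" and e: "partner M (k - 1) = k"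
    have "{k - 1, k} \<in> M" using partner_edge[OF spm, of "k-1"] e k tb by auto
    moreover have "seg m (k - 1) k = {k-1, k}" using k tb by (intro seg_in_range) auto
    moreover have "k = int (nat k)" using k by auto
    moreover have "1 \<le> nat k" "nat k \<le> t" using k by auto
    ultimately show False using av1[of "nat k"] by auto
  qed
  show "\<And>k. int t + 1 \<le> k \<Longrightarrow> k \<le> int m \<Longrightarrow> 0 \<le> k - 1 - \<epsilon> (nat k) \<Longrightarrow> k + \<epsilon> (nat k) < 2 * int m \<Longrightarrow>
          partner M (k - 1 - \<epsilon> (nat k)) \<noteq> k + \<epsilon> (nat k)"
  proof
    fix k assume k: "int t + 1 \<le> k" "k \<le> int m" "0 \<le> k - 1 - \<epsilon> (nat k)" "k + \<epsilon> (nat k) < 2 * int m"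
      and e: "partner M (k - 1 - \<epsilon> (nat k)) = k + \<epsilon> (nat k)"
    have "t + 1 \<le> nat k" "nat k \<le> m" using k by auto
    hence ek: "1 \<le> \<epsilon> (nat k)" "\<epsilon> (nat k) \<le> int m - 2" using eb by blast+
    have "{k - 1 - \<epsilon> (nat k), k + \<epsilon> (nat k)} \<in> M" using partner_edge[OF spm, of "k - 1 - \<epsilon> (nat k)"] e k ek by auto
    moreover have "seg m (k - 1 - \<epsilon> (nat k)) (k + \<epsilon> (nat k)) = {k - 1 - \<epsilon> (nat k), k + \<epsilon> (nat k)}"
      using k ek by (intro seg_in_range) auto
    moreover define j where "j = nat k - t"
    moreover have "t + j = nat k" "int t + int j = k" "1 \<le> j" "j \<le> m - t" using k unfolding j_def by auto
    ultimately show False using av2[of j] by auto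
  qed
  show "2 \<le> int t" "int t \<le> int m" using tb by auto
  show "\<And>k. int t + 1 \<le> k \<Longrightarrow> k \<le> int m \<Longrightarrow> 1 \<le> \<epsilon> (nat k) \<and> \<epsilon> (nat k) \<le> int m - 2"
  proof -
    fix k :: int assume h: "int t + 1 \<le> k" "k \<le> int m"
    hence "t + 1 \<le> nat k" "nat k \<le> m" by auto
    thus "1 \<le> \<epsilon> (nat k) \<and> \<epsilon> (nat k) \<le> int m - 2" using eb by blast
  qed
  show "\<And>k l. int t + 1 \<le> k \<Longrightarrow> k < l \<Longrightarrow> l \<le> int m \<Longrightarrow> \<epsilon> (nat k) < \<epsilon> (nat l)"
  proof -
    fix k l :: int assume h: "int t + 1 \<le> k" "k < l" "l \<le> int m"
    hence "t + 1 \<le> nat k \<and> nat k < nat l \<and> nat l \<le> m" by auto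
    thus "\<epsilon> (nat k) < \<epsilon> (nat l)" using einc by blast
  qed
qed


lemma form_inj:
  fixes m t :: nat and \<epsilon> :: "nat \<Rightarrow> int" and a :: int
  defines "F \<equiv> \<lambda>k. seg m (a + int k - 1 - (if k \<le> t then 0 else \<epsilon> k)) (a + int k + (if k \<le> t then 0 else \<epsilon> k))"
  shows "inj_on F {1..m}"
proof (rule inj_onI)
  fix k k' assume k: "k \<in> {1..m}" "k' \<in> {1..m}" and e: "F k = F k'"
  show "k = k'"
  proof (rule ccontr)
    assume ne: "k \<noteq> k'"
    let ?d = "if k \<le> t then 0 else \<epsilon> k" and ?d' = "if k' \<le> t then 0 else \<epsilon> k'"
    have "seg m ((a + int k - 1) - ?d) ((a + int k - 1) + 1 + ?d) = seg m ((a + int k' - 1) - ?d') ((a + int k' - 1) + 1 + ?d')"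
      using e unfolding F_def by (simp add: algebra_simps)
    moreover have "\<bar>(a + int k - 1) - (a + int k' - 1)\<bar> < int m" using k by auto
    moreover have "a + int k - 1 \<noteq> a + int k' - 1" using ne by auto
    ultimately show False using class_disj by blast
  qed
qed

lemma form_set:
  fixes m t :: nat and \<epsilon> :: "nat \<Rightarrow> int" and a :: int
  assumes "t \<le> m"
  defines "F \<equiv> \<lambda>k. seg m (a + int k - 1 - (if k \<le> t then 0 else \<epsilon> k)) (a + int k + (if k \<le> t then 0 else \<epsilon> k))"
  shows "{seg m (a + int i - 1) (a + int i) | i. 1 \<le> i \<and> i \<le> t}
         \<union> {seg m (a + int t + int j - 1 - \<epsilon> (t + j)) (a + int t + int j + \<epsilon> (t + j)) | j. 1 \<le> j \<and> j \<le> m - t}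
       = F ` {1..m}" (is "?S1 \<union> ?S2 = _")
proof
  show "?S1 \<union> ?S2 \<subseteq> F ` {1..m}"
  proof
    fix e assume "e \<in> ?S1 \<union> ?S2"
    then consider (a) i where "1 \<le> i" "i \<le> t" "e = seg m (a + int i - 1) (a + int i)"
      | (b) j where "1 \<le> j" "j \<le> m - t" "e = seg m (a + int t + int j - 1 - \<epsilon> (t + j)) (a + int t + int j + \<epsilon> (t + j))"
      by blast
    then show "e \<in> F ` {1..m}"
    proof cases
      case a
      hence e: "e = F i" unfolding F_def by simp
      have "i \<in> {1..m}" using a assms by auto
      thus ?thesis using e by (rule rev_image_eqI)
    next
      case b
      hence e: "e = F (t + j)" unfolding F_def by (simp add: algebra_simps)
      have "t + j \<in> {1..m}" using b assms by auto
      thus ?thesis using e by (rule rev_image_eqI)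
    qed
  qed
  show "F ` {1..m} \<subseteq> ?S1 \<union> ?S2"
  proof
    fix e assume "e \<in> F ` {1..m}"
    then obtain k where k: "1 \<le> k" "k \<le> m" "e = F k" by auto
    show "e \<in> ?S1 \<union> ?S2"
    proof (cases "k \<le> t")
      case True
      hence "e = seg m (a + int k - 1) (a + int k)" using k unfolding F_def by simp
      thus ?thesis using True k by blast
    next
      case False
      define j where "j = k - t"
      have j: "1 \<le> j" "j \<le> m - t" "t + j = k" using False k unfolding j_def by auto
      have "e = seg m (a + int t + int j - 1 - \<epsilon> (t + j)) (a + int t + int j + \<epsilon> (t + j))"
        using k False j(3) unfolding F_def by (simp add: algebra_simps flip: j(3))
      thus ?thesis using j by blast
    qed
  qed
qed


lemma rot_back:
  assumes "e \<in> ck_edges m" "rot m (-a) e = seg m x y"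
  shows "e = seg m (a + x) (a + y)"
proof -
  have "e = rot m (- (-a)) (rot m (-a) e)" using rot_inv[OF assms(1), of "-a"] by simp
  also have "\<dots> = rot m a (seg m x y)" using assms(2) by simp
  also have "\<dots> = seg m (a + x) (a + y)" by (simp add: seg_rot add.commute)
  finally show ?thesis .
qed

lemma suff_dir:
  fixes m t :: nat and \<epsilon> :: "nat \<Rightarrow> int" and a :: int and B :: "int set set"
  assumes m2: "m \<ge> 2" and Bck: "B \<subseteq> ck_edges m" and tb: "2 \<le> t" "t \<le> m"
    and eb: "\<forall>k. t + 1 \<le> k \<and> k \<le> m \<longrightarrow> 1 \<le> \<epsilon> k \<and> \<epsilon> k \<le> int m - 2"
    and einc: "\<forall>k l. t + 1 \<le> k \<and> k < l \<and> l \<le> m \<longrightarrow> \<epsilon> k < \<epsilon> l"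
    and BF: "B = {seg m (a + int i - 1) (a + int i) | i. 1 \<le> i \<and> i \<le> t}
         \<union> {seg m (a + int t + int j - 1 - \<epsilon> (t + j)) (a + int t + int j + \<epsilon> (t + j)) | j. 1 \<le> j \<and> j \<le> m - t}"
  shows "blocker m B"
proof -
  define F where "F \<equiv> \<lambda>k. seg m (a + int k - 1 - (if k \<le> t then 0 else \<epsilon> k)) (a + int k + (if k \<le> t then 0 else \<epsilon> k))"
  have BF': "B = F ` {1..m}" using BF form_set[OF tb(2), of a \<epsilon>] unfolding F_def by simp
  have inj: "inj_on F {1..m}" unfolding F_def by (rule form_inj)
  have fin: "finite B" using BF' by simp
  have card: "card B = m" using BF' card_image[OF inj] by simp
  have bl: "\<forall>M. is_SPM m M \<longrightarrow> B \<inter> M \<noteq> {}"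
  proof (intro allI impI)
    fix M assume spm: "is_SPM m M"
    show "B \<inter> M \<noteq> {}"
    proof
      assume disj: "B \<inter> M = {}"
      have Mck: "M \<subseteq> ck_edges m" using spm unfolding is_SPM_def by auto
      let ?M' = "rot m (-a) ` M"
      have spm': "is_SPM m ?M'" using SPM_rot[of m M "-a"] spm m2 by auto
      show False
      proof (rule suff_core[OF m2 spm' tb eb einc])
        fix i :: nat assume i: "1 \<le> i" "i \<le> t"
        show "seg m (int i - 1) (int i) \<notin> ?M'"
        proof
          assume "seg m (int i - 1) (int i) \<in> ?M'"
          then obtain e where e: "e \<in> M" "rot m (-a) e = seg m (int i - 1) (int i)" by auto
          have "e = seg m (a + (int i - 1)) (a + int i)" using rot_back[of e m a] e Mck by auto
          hence "e \<in> B" unfolding BF using i by (auto simp: algebra_simps)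
          thus False using e disj by auto
        qed
      next
        fix j :: nat assume j: "1 \<le> j" "j \<le> m - t"
        show "seg m (int t + int j - 1 - \<epsilon> (t + j)) (int t + int j + \<epsilon> (t + j)) \<notin> ?M'"
        proof
          assume "seg m (int t + int j - 1 - \<epsilon> (t + j)) (int t + int j + \<epsilon> (t + j)) \<in> ?M'"
          then obtain e where e: "e \<in> M" "rot m (-a) e = seg m (int t + int j - 1 - \<epsilon> (t + j)) (int t + int j + \<epsilon> (t + j))" by auto
          have "e = seg m (a + (int t + int j - 1 - \<epsilon> (t + j))) (a + (int t + int j + \<epsilon> (t + j)))"
            using rot_back[of e m a] e Mck by auto
          hence "e \<in> B" unfolding BF using j by (auto simp: algebra_simps)
          thus False using e disj by auto
        qed
      qed
    qed
  qed
  show ?thesis unfolding blocker_def blocking_set_def using Bck bl fin card by auto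
qed


definition Eseg :: "nat \<Rightarrow> int set set \<Rightarrow> int \<Rightarrow> int set" where
  "Eseg m B y = seg m (y - rho m B y) (y + 1 + rho m B y)"

lemma Eseg_m: assumes "m \<ge> 2" "blocker m B" shows "Eseg m B (y + int m) = Eseg m B y"
proof -
  let ?r = "rho m B y"
  have "Eseg m B (y + int m) = seg m (y + int m - (int m - 1 - ?r)) (y + int m + 1 + (int m - 1 - ?r))"
    unfolding Eseg_def using rho_m[OF assms] by simp
  also have "\<dots> = seg m (y+1+?r) ((y - ?r) + 2*int m)" by (simp add: algebra_simps)
  also have "\<dots> = seg m (y - ?r) (y+1+?r)" using seg_shift seg_swap by metis
  finally show ?thesis unfolding Eseg_def by simp
qed

lemma Eseg_per_nat: assumes "m \<ge> 2" "blocker m B" shows "Eseg m B (w + int m * int q) = Eseg m B w"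
proof (induction q)
  case 0 thus ?case by simp
next
  case (Suc q)
  have e: "w + int m * int (Suc q) = (w + int m * int q) + int m" by (simp add: algebra_simps)
  show ?case unfolding e Eseg_m[OF assms, of "w + int m * int q"] by (rule Suc)
qed

lemma Eseg_red: assumes "m \<ge> 2" "blocker m B"
  shows "Eseg m B y = Eseg m B (a + (y - a) mod int m)"
proof -
  define w where "w = a + (y - a) mod int m"
  define q where "q = (y - a) div int m"
  have y: "y = w + int m * q" unfolding w_def q_def by (simp add: algebra_simps)
  show ?thesis
  proof (cases "q \<ge> 0")
    case True
    hence "y = w + int m * int (nat q)" using y by simp
    thus ?thesis using Eseg_per_nat[OF assms, of w "nat q"] unfolding w_def by simp
  next
    case False
    hence "w = y + int m * int (nat (-q))" using y by simp
    thus ?thesis using Eseg_per_nat[OF assms, of y "nat (-q)"] unfolding w_def by simp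
  qed
qed

lemma nec_dir:
  fixes m :: nat and B :: "int set set"
  assumes m2: "m \<ge> 2" and bl: "blocker m B"
  shows "\<exists>(a::int) (t::nat) (\<epsilon>::nat \<Rightarrow> int).
       2 \<le> t \<and> t \<le> m \<and>
       (\<forall>k. t + 1 \<le> k \<and> k \<le> m \<longrightarrow> 1 \<le> \<epsilon> k \<and> \<epsilon> k \<le> int m - 2) \<and>
       (\<forall>k l. t + 1 \<le> k \<and> k < l \<and> l \<le> m \<longrightarrow> \<epsilon> k < \<epsilon> l) \<and>
       B = {seg m (a + int i - 1) (a + int i) | i. 1 \<le> i \<and> i \<le> t}
         \<union> {seg m (a + int t + int j - 1 - \<epsilon> (t + j)) (a + int t + int j + \<epsilon> (t + j))
             | j. 1 \<le> j \<and> j \<le> m - t}"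
proof -
  let ?\<rho> = "rho m B"
  have R: "\<And>y. 0 \<le> ?\<rho> y \<and> ?\<rho> y \<le> int m - 1"
  proof -
    fix y show "0 \<le> ?\<rho> y \<and> ?\<rho> y \<le> int m - 1" using rho_spec[OF m2 bl, of y] by auto
  qed
  have A: "\<And>y. ?\<rho> (y + int m) = int m - 1 - ?\<rho> y" using rho_m[OF m2 bl] .
  have D: "\<And>x l. 1 \<le> l \<Longrightarrow> l \<le> int m - 2 \<Longrightarrow> ?\<rho> (x+1) \<le> l \<Longrightarrow> l \<le> ?\<rho> x \<Longrightarrow> ?\<rho> (x+l+1) = 0"
    using D_cond[OF m2 bl] .
  obtain z T where z: "?\<rho> z = 0" and T: "?\<rho> T = int m - 1" and zT: "z < T"
    and inc: "\<forall>y. z \<le> y \<and> y < T \<longrightarrow> ?\<rho> y < ?\<rho> (y+1)"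
    and zeros: "\<forall>q. T - int m \<le> q \<and> q \<le> z \<longrightarrow> ?\<rho> q = 0"
    using main_comb[OF m2 R A D] by blast
  have inc': "\<And>y0. z \<le> y0 \<Longrightarrow> \<forall>y. y0 \<le> y \<and> y < T \<longrightarrow> ?\<rho> y < ?\<rho> (y+1)" using inc by auto
  have "?\<rho> T \<ge> ?\<rho> z + (T - z)" using mono_steps[OF inc, of T] zT by auto
  hence Tz: "T - z \<le> int m - 1" using z T by auto
  define a where "a = T - int m"
  define t where "t = nat (z - T + int m + 1)"
  have ti: "int t = z - T + int m + 1" unfolding t_def using Tz by auto
  have t2: "2 \<le> t" "t \<le> m" using ti Tz zT by auto
  have at: "a + int t = z + 1" unfolding a_def using ti by simp
  define \<epsilon> where "\<epsilon> = (\<lambda>k::nat. ?\<rho> (a + int k - 1))"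
  have yrange: "z + 1 \<le> a + int k - 1 \<and> a + int k - 1 \<le> T - 1" if "t + 1 \<le> k" "k \<le> m" for k
    using that at unfolding a_def by auto
  have eb: "\<forall>k. t + 1 \<le> k \<and> k \<le> m \<longrightarrow> 1 \<le> \<epsilon> k \<and> \<epsilon> k \<le> int m - 2"
  proof (intro allI impI)
    fix k assume k: "t + 1 \<le> k \<and> k \<le> m"
    let ?y = "a + int k - 1"
    have yr: "z + 1 \<le> ?y" "?y \<le> T - 1" using yrange k by auto
    have "?\<rho> ?y \<ge> ?\<rho> z + (?y - z)" using mono_steps[OF inc, of ?y] yr by auto
    moreover have "?\<rho> T \<ge> ?\<rho> ?y + (T - ?y)" using mono_steps[OF inc'[of ?y], of T] yr by auto
    ultimately show "1 \<le> \<epsilon> k \<and> \<epsilon> k \<le> int m - 2" unfolding \<epsilon>_def using z T yr by auto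
  qed
  have einc: "\<forall>k l. t + 1 \<le> k \<and> k < l \<and> l \<le> m \<longrightarrow> \<epsilon> k < \<epsilon> l"
  proof (intro allI impI)
    fix k l assume kl: "t + 1 \<le> k \<and> k < l \<and> l \<le> m"
    let ?y = "a + int k - 1" and ?y' = "a + int l - 1"
    have yr: "z + 1 \<le> ?y" "?y' \<le> T - 1" "?y < ?y'" using yrange[of k] yrange[of l] kl by auto
    have "?\<rho> ?y' \<ge> ?\<rho> ?y + (?y' - ?y)" using mono_steps[OF inc'[of ?y], of ?y'] yr by auto
    thus "\<epsilon> k < \<epsilon> l" unfolding \<epsilon>_def using yr by auto
  qed
  let ?S1 = "{seg m (a + int i - 1) (a + int i) | i. 1 \<le> i \<and> i \<le> t}"
  let ?S2 = "{seg m (a + int t + int j - 1 - \<epsilon> (t + j)) (a + int t + int j + \<epsilon> (t + j)) | j. 1 \<le> j \<and> j \<le> m - t}"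
  have Ein: "\<And>y. Eseg m B y \<in> B" unfolding Eseg_def using rho_spec[OF m2 bl] by blast
  have S1: "seg m (a + int i - 1) (a + int i) = Eseg m B (a + int i - 1)" if "1 \<le> i" "i \<le> t" for i
  proof -
    have "?\<rho> (a + int i - 1) = 0" using zeros that at unfolding a_def by auto
    thus ?thesis unfolding Eseg_def by simp
  qed
  have S2: "seg m (a + int t + int j - 1 - \<epsilon> (t + j)) (a + int t + int j + \<epsilon> (t + j)) = Eseg m B (a + int t + int j - 1)" for j
    unfolding Eseg_def \<epsilon>_def by (simp add: algebra_simps)
  have "B = ?S1 \<union> ?S2"
  proof
    show "?S1 \<union> ?S2 \<subseteq> B" using S1 S2 Ein by auto
    show "B \<subseteq> ?S1 \<union> ?S2"
    proof
      fix e assume e: "e \<in> B"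
      obtain y where y: "e = Eseg m B y" using B_classes[OF m2 bl e] unfolding Eseg_def by blast
      define w where "w = a + (y - a) mod int m"
      have ew: "e = Eseg m B w" using y Eseg_red[OF m2 bl, of y a] unfolding w_def by simp
      have wr: "a \<le> w" "w \<le> a + int m - 1" unfolding w_def using m2 by auto
      show "e \<in> ?S1 \<union> ?S2"
      proof (cases "w \<le> z")
        case True
        define i where "i = nat (w - a + 1)"
        have i: "1 \<le> i" "i \<le> t" "int i = w - a + 1" unfolding i_def using True wr at by auto
        have "e = seg m (a + int i - 1) (a + int i)" using S1[OF i(1,2)] ew i(3) by simp
        thus ?thesis using i by blast
      next
        case False
        define j where "j = nat (w - a - int t + 1)"
        have j: "1 \<le> j" "j \<le> m - t" "int j = w - a - int t + 1" unfolding j_def using False wr at t2 by auto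
        have "e = seg m (a + int t + int j - 1 - \<epsilon> (t + j)) (a + int t + int j + \<epsilon> (t + j))"
          using S2[of j] ew j(3) by simp
        thus ?thesis using j by blast
      qed
    qed
  qed
  thus ?thesis using t2 eb einc by blast
qed

theorem theorem1:
  fixes m :: nat and B :: "int set set"
  assumes "m \<ge> 2" and "B \<subseteq> ck_edges m"
  shows "blocker m B \<longleftrightarrow>
    (\<exists>(a::int) (t::nat) (\<epsilon>::nat \<Rightarrow> int).
       2 \<le> t \<and> t \<le> m \<and>
       (\<forall>k. t + 1 \<le> k \<and> k \<le> m \<longrightarrow> 1 \<le> \<epsilon> k \<and> \<epsilon> k \<le> int m - 2) \<and>
       (\<forall>k l. t + 1 \<le> k \<and> k < l \<and> l \<le> m \<longrightarrow> \<epsilon> k < \<epsilon> l) \<and>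
       B = {seg m (a + int i - 1) (a + int i) | i. 1 \<le> i \<and> i \<le> t}
         \<union> {seg m (a + int t + int j - 1 - \<epsilon> (t + j)) (a + int t + int j + \<epsilon> (t + j))
             | j. 1 \<le> j \<and> j \<le> m - t})"
proof
  assume "blocker m B"
  from nec_dir[OF assms(1) this] show "\<exists>(a::int) (t::nat) (\<epsilon>::nat \<Rightarrow> int).
       2 \<le> t \<and> t \<le> m \<and>
       (\<forall>k. t + 1 \<le> k \<and> k \<le> m \<longrightarrow> 1 \<le> \<epsilon> k \<and> \<epsilon> k \<le> int m - 2) \<and>
       (\<forall>k l. t + 1 \<le> k \<and> k < l \<and> l \<le> m \<longrightarrow> \<epsilon> k < \<epsilon> l) \<and>
       B = {seg m (a + int i - 1) (a + int i) | i. 1 \<le> i \<and> i \<le> t}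
         \<union> {seg m (a + int t + int j - 1 - \<epsilon> (t + j)) (a + int t + int j + \<epsilon> (t + j))
             | j. 1 \<le> j \<and> j \<le> m - t}" .
next
  assume "\<exists>(a::int) (t::nat) (\<epsilon>::nat \<Rightarrow> int).
       2 \<le> t \<and> t \<le> m \<and>
       (\<forall>k. t + 1 \<le> k \<and> k \<le> m \<longrightarrow> 1 \<le> \<epsilon> k \<and> \<epsilon> k \<le> int m - 2) \<and>
       (\<forall>k l. t + 1 \<le> k \<and> k < l \<and> l \<le> m \<longrightarrow> \<epsilon> k < \<epsilon> l) \<and>
       B = {seg m (a + int i - 1) (a + int i) | i. 1 \<le> i \<and> i \<le> t}
         \<union> {seg m (a + int t + int j - 1 - \<epsilon> (t + j)) (a + int t + int j + \<epsilon> (t + j))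
             | j. 1 \<le> j \<and> j \<le> m - t}"
  then obtain a t \<epsilon> where h: "2 \<le> t" "t \<le> m"
       "\<forall>k. t + 1 \<le> k \<and> k \<le> m \<longrightarrow> 1 \<le> \<epsilon> k \<and> \<epsilon> k \<le> int m - 2"
       "\<forall>k l. t + 1 \<le> k \<and> k < l \<and> l \<le> m \<longrightarrow> \<epsilon> k < \<epsilon> l"
       "B = {seg m (a + int i - 1) (a + int i) | i. 1 \<le> i \<and> i \<le> t}
         \<union> {seg m (a + int t + int j - 1 - \<epsilon> (t + j)) (a + int t + int j + \<epsilon> (t + j))
             | j. 1 \<le> j \<and> j \<le> m - t}" by blast
  show "blocker m B" by (rule suff_dir[OF assms(1) assms(2) h])
qed


end
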